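(* Let \[ SA_{425} = 2^9 \cdot 3^5 \cdot 5^3 \cdot 7^2 \cdot 11^2 \cdot 13^2 \cdot \prod_{17\le p \le 149} p, \qquad J_0 = 2^9 \cdot 3^5 \cdot 5^3 \cdot 7^2 \cdot 11^2 \cdot 13^2 \cdot 151 \cdot \prod_{17\le p \le 139} p, \] (products over primes), and let $N_{39}$ be the product of the first $39$ primes. The only integer $n$ in the open interval $(SA_{425}, N_{39})$ satisfying \[ \frac{\sigma(n)}{n} > 8.8272 \] is $n = J_0$.
   Context: $\sigma(n)$ is the sum of the positive divisors of $n$. A positive integer $N$ is superabundant if $\sigma(m)/m < \sigma(N)/N$ for all $0<m<N$; the number $SA_{425}$ given above is the $425$th superabundant number. *)

theory Defs
  imports Complex_Main "HOL-Computational_Algebra.Primes"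
begin

definition divisor_sigma :: "nat \<Rightarrow> nat" where
  "divisor_sigma n = (\<Sum>d\<in>{d. d dvd n \<and> 0 < d}. d)"

definition first_primes :: "nat \<Rightarrow> nat set" where
  "first_primes k = {p. prime p \<and> card {q. prime q \<and> q < p} < k}"

definition SA425 :: nat where
  "SA425 = 2^9 * 3^5 * 5^3 * 7^2 * 11^2 * 13^2 * (\<Prod>p\<in>{p. prime p \<and> 17 \<le> p \<and> p \<le> 149}. p)"

definition J0 :: nat where
  "J0 = 2^9 * 3^5 * 5^3 * 7^2 * 11^2 * 13^2 * 151 * (\<Prod>p\<in>{p. prime p \<and> 17 \<le> p \<and> p \<le> 139}. p)"

definition N39 :: nat where
  "N39 = (\<Prod>p\<in>first_primes 39. p)"

end

theory Submission
  imports Defs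
begin

lemma divisor_sigma_mult:
  assumes cop: "coprime a b" and a0: "a > 0" and b0: "b > 0"
  shows "divisor_sigma (a * b) = divisor_sigma a * divisor_sigma b"
proof -
  let ?D = "\<lambda>n::nat. {d. d dvd n \<and> 0 < d}"
  have img: "?D (a*b) = (\<lambda>(x,y). x*y) ` (?D a \<times> ?D b)"
  proof
    show "?D (a*b) \<subseteq> (\<lambda>(x,y). x*y) ` (?D a \<times> ?D b)"
    proof
      fix d assume "d \<in> ?D (a*b)"
      then have d: "d dvd a*b" "d > 0" by auto
      from division_decomp[OF d(1)] obtain x y where "d = x*y" "x dvd a" "y dvd b" by blast
      with d(2) show "d \<in> (\<lambda>(x,y). x*y) ` (?D a \<times> ?D b)" by (auto intro!: image_eqI[of _ _ "(x,y)"])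
    qed
  qed (auto intro: mult_dvd_mono)
  have inj: "inj_on (\<lambda>(x,y). x*y) (?D a \<times> ?D b)"
  proof (rule inj_onI, clarsimp)
    fix x1 y1 x2 y2 :: nat
    assume h: "x1 dvd a" "0 < x1" "y1 dvd b" "0 < y1" "x2 dvd a" "0 < x2" "y2 dvd b" "0 < y2" "x1*y1 = x2*y2"
    have c12: "coprime x1 y2" using cop h by (meson coprime_divisors)
    have c21: "coprime x2 y1" using cop h by (meson coprime_divisors)
    have "x1 dvd x2 * y2" using h(9) by (metis dvd_triv_left)
    then have "x1 dvd x2" using c12 by (simp add: coprime_dvd_mult_left_iff)
    moreover have "x2 dvd x1 * y1" using h(9) by (metis dvd_triv_left)
    then have "x2 dvd x1" using c21 by (simp add: coprime_dvd_mult_left_iff)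
    ultimately have "x1 = x2" by (simp add: dvd_antisym)
    with h show "x1 = x2 \<and> y1 = y2" by simp
  qed
  have "divisor_sigma (a*b) = (\<Sum>d\<in>?D (a*b). d)" by (simp add: divisor_sigma_def)
  also have "\<dots> = (\<Sum>(x,y)\<in>?D a \<times> ?D b. x*y)"
    unfolding img by (subst sum.reindex[OF inj]) (simp add: case_prod_unfold)
  also have "\<dots> = (\<Sum>x\<in>?D a. \<Sum>y\<in>?D b. x*y)"
    by (rule sum.cartesian_product[symmetric])
  also have "\<dots> = divisor_sigma a * divisor_sigma b"
    by (simp add: divisor_sigma_def sum_product)
  finally show ?thesis .
qed

lemma divisor_sigma_prime_power:
  assumes p: "prime p"
  shows "divisor_sigma (p ^ k) = (\<Sum>i\<le>k. p ^ i)"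
proof -
  have "{d. d dvd p ^ k \<and> 0 < d} = (\<lambda>i. p ^ i) ` {..k}"
    using p by (auto simp: divides_primepow_nat prime_gt_0_nat)
  moreover have "inj_on (\<lambda>i. p ^ i) {..k}"
    using prime_gt_1_nat[OF p] by (intro inj_onI) simp
  ultimately show ?thesis by (simp add: divisor_sigma_def sum.reindex)
qed

definition fpp :: "nat \<Rightarrow> nat \<Rightarrow> real" where
  "fpp p a = (\<Sum>i\<le>a. 1 / real p ^ i)"

lemma fpp_prime_power:
  assumes p: "prime p"
  shows "real (divisor_sigma (p ^ a)) / real (p ^ a) = fpp p a"
proof -
  have p0: "real p > 0" using p prime_gt_0_nat by simp
  have "real (divisor_sigma (p ^ a)) = (\<Sum>i\<le>a. real p ^ i)"
    using divisor_sigma_prime_power[OF p] by simp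
  then have "real (divisor_sigma (p ^ a)) / real (p ^ a) = (\<Sum>i\<le>a. real p ^ i / real p ^ a)"
    by (simp add: sum_divide_distrib)
  also have "\<dots> = (\<Sum>i\<le>a. 1 / real p ^ (a - i))"
    by (rule sum.cong) (use p0 in \<open>auto simp: power_diff\<close>)
  also have "\<dots> = fpp p a"
    unfolding fpp_def by (rule sum.reindex_bij_witness[of _ "\<lambda>i. a - i" "\<lambda>i. a - i"]) auto
  finally show ?thesis .
qed

lemma divisor_sigma_prod:
  assumes "finite P" "\<And>p. p \<in> P \<Longrightarrow> prime p"
  shows "divisor_sigma (\<Prod>p\<in>P. p ^ e p) = (\<Prod>p\<in>P. divisor_sigma (p ^ e p))"
  using assms
proof (induction P rule: finite_induct)
  case empty
  have "{d. d dvd (1::nat) \<and> 0 < d} = {1}" by auto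
  then show ?case by (simp add: divisor_sigma_def)
next
  case (insert q P)
  have pq: "prime q" using insert by auto
  have c1: "coprime q (p ^ e p)" if "p \<in> P" for p
  proof -
    have "prime p" "p \<noteq> q" using insert that by auto
    then have "coprime q p" using pq by (simp add: primes_coprime)
    then show ?thesis by simp
  qed
  have "coprime q (\<Prod>p\<in>P. p ^ e p)" using c1 by (simp add: prod_coprime_right)
  then have cop: "coprime (q ^ e q) (\<Prod>p\<in>P. p ^ e p)" by simp
  have pos: "(\<Prod>p\<in>P. p ^ e p) > 0" using insert by (auto intro!: prod_pos simp: prime_gt_0_nat)
  have "divisor_sigma (\<Prod>p\<in>insert q P. p ^ e p) = divisor_sigma (q ^ e q * (\<Prod>p\<in>P. p ^ e p))"
    using insert by simp
  also have "\<dots> = divisor_sigma (q ^ e q) * divisor_sigma (\<Prod>p\<in>P. p ^ e p)"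
    by (rule divisor_sigma_mult[OF cop]) (use pq pos prime_gt_0_nat in auto)
  finally show ?case using insert by simp
qed

lemma sigma_ratio_prod:
  assumes n: "n > 0"
  shows "real (divisor_sigma n) / real n = (\<Prod>p\<in>prime_factors n. fpp p (multiplicity p n))"
proof -
  let ?P = "prime_factors n"
  have nf: "n = (\<Prod>p\<in>?P. p ^ multiplicity p n)" using prime_factorization_nat[OF n] .
  have "divisor_sigma n = (\<Prod>p\<in>?P. divisor_sigma (p ^ multiplicity p n))"
    by (subst nf, rule divisor_sigma_prod) auto
  then have "real (divisor_sigma n) / real n =
      (\<Prod>p\<in>?P. real (divisor_sigma (p ^ multiplicity p n))) / (\<Prod>p\<in>?P. real (p ^ multiplicity p n))"
    by (subst (2) nf) (simp add: of_nat_prod)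
  also have "\<dots> = (\<Prod>p\<in>?P. real (divisor_sigma (p ^ multiplicity p n)) / real (p ^ multiplicity p n))"
    by (rule prod_dividef[symmetric])
  also have "\<dots> = (\<Prod>p\<in>?P. fpp p (multiplicity p n))"
    by (rule prod.cong[OF refl], rule fpp_prime_power) auto
  finally show ?thesis .
qed

lemma exp_upper_taylor:
  fixes x :: real
  assumes x: "0 \<le> x" and R: "x ^ n / fact n < 1"
  shows "exp x \<le> (\<Sum>m<n. x ^ m / fact m) / (1 - x ^ n / fact n)"
proof -
  define S where "S = (\<Sum>m<n. x ^ m / fact m)"
  define r where "r = x ^ n / fact n"
  obtain t where t: "\<bar>t\<bar> \<le> \<bar>x\<bar>" and e: "exp x = S + (exp t / fact n) * x ^ n"
    using Maclaurin_exp_le unfolding S_def by blast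
  have "exp t \<le> exp x" using t x by simp
  then have "(exp t / fact n) * x ^ n \<le> exp x * r"
    using x unfolding r_def by (simp add: divide_right_mono mult_right_mono)
  then have "exp x \<le> S + exp x * r" using e by linarith
  then have "exp x * (1 - r) \<le> S" by (simp add: algebra_simps)
  moreover have "1 - r > 0" using R unfolding r_def by simp
  ultimately have "exp x \<le> S / (1 - r)" by (simp add: le_divide_eq)
  then show ?thesis unfolding S_def r_def .
qed

lemma exp_lower_taylor:
  fixes x :: real
  assumes x: "0 \<le> x"
  shows "(\<Sum>m<n. x ^ m / fact m) \<le> exp x"
proof -
  obtain t where e: "exp x = (\<Sum>m<n. x ^ m / fact m) + (exp t / fact n) * x ^ n"
    using Maclaurin_exp_le by blast
  have "0 \<le> (exp t / fact n) * x ^ n" using x by simp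
  then show ?thesis using e by linarith
qed

lemma ln_prodlist:
  assumes "\<forall>(p,e)\<in>set xs. (p::real) > 0"
  shows "ln (\<Prod>(p,e)\<leftarrow>xs. p ^ e) = (\<Sum>(p,e)\<leftarrow>xs. real e * ln p)"
  using assms
proof (induction xs)
  case Nil
  then show ?case by simp
next
  case (Cons a xs)
  obtain p e where a: "a = (p,e)" by fastforce
  have p: "p > 0" using Cons a by auto
  have pos: "(\<Prod>(p,e)\<leftarrow>xs. p ^ e) > 0"
    using Cons.prems by (induction xs) (auto simp: case_prod_beta)
  show ?case using Cons a p pos by (simp add: ln_mult ln_realpow)
qed

lemma rel_ln:
  fixes q y :: real
  assumes eq: "q ^ k * (\<Prod>(p,e)\<leftarrow>em. p ^ e) = (\<Prod>(p,e)\<leftarrow>er. p ^ e) * y"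
    and q: "q > 0" and pm: "\<forall>(p,e)\<in>set em. p > 0" and pr: "\<forall>(p,e)\<in>set er. p > 0" and y: "y > 0"
  shows "real k * ln q + (\<Sum>(p,e)\<leftarrow>em. real e * ln p) = (\<Sum>(p,e)\<leftarrow>er. real e * ln p) + ln y"
proof -
  have pos1: "(\<Prod>(p,e)\<leftarrow>em. p ^ e) > 0"
    using pm by (induction em) (auto simp: case_prod_beta)
  have pos2: "(\<Prod>(p,e)\<leftarrow>er. p ^ e) > 0"
    using pr by (induction er) (auto simp: case_prod_beta)
  have "ln (q ^ k * (\<Prod>(p,e)\<leftarrow>em. p ^ e)) = ln ((\<Prod>(p,e)\<leftarrow>er. p ^ e) * y)"
    using eq by simp
  then show ?thesis
    using q y pos1 pos2 by (simp add: ln_mult ln_realpow ln_prodlist pm pr)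
qed

lemma ln1p_pos:
  fixes y a b :: real
  assumes "0 \<le> y - 1" "y - 1 \<le> 1" "a = (y - 1) - (y - 1)^2" "b = y - 1"
  shows "a \<le> ln y \<and> ln y \<le> b"
  using ln_one_plus_pos_lower_bound[of "y - 1"] ln_add_one_self_le_self2[of "y - 1"] assms by simp

lemma ln1p_neg:
  fixes y a b :: real
  assumes "0 \<le> 1 - y" "1 - y \<le> 1/2" "a = - (1 - y) - 2 * (1 - y)^2" "b = - (1 - y)"
  shows "a \<le> ln y \<and> ln y \<le> b"
  using ln_one_minus_pos_lower_bound[of "1 - y"] ln_one_minus_pos_upper_bound[of "1 - y"] assms by simp

lemma le_ln_of_exp:
  fixes a b :: real
  assumes "exp a \<le> b" shows "a \<le> ln b"
proof -
  have b: "b > 0" using assms exp_gt_zero[of a] by linarith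
  have "ln (exp a) \<le> ln b" using assms b by (subst ln_le_cancel_iff) simp_all
  then show ?thesis by simp
qed

lemma ln_le_of_exp:
  fixes a b :: real
  assumes "b \<le> exp a" "b > 0" shows "ln b \<le> a"
proof -
  have "ln b \<le> ln (exp a)" using assms by (subst ln_le_cancel_iff) simp_all
  then show ?thesis by simp
qed

lemma lnb_2: "(693147/1000000::real) \<le> ln (2::real) \<and> ln (2::real) \<le> (693148/1000000::real)"
proof
  have "exp (693147/1000000::real) \<le> (\<Sum>m<12. (693147/1000000::real) ^ m / fact m) / (1 - (693147/1000000) ^ 12 / fact 12)"
    by (rule exp_upper_taylor) (simp_all add: fact_numeral power_divide)
  also have "\<dots> \<le> 2"
    by (simp add: lessThan_nat_numeral fact_numeral power_divide)
  finally have "exp (693147/1000000::real) \<le> 2" .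
  then show "(693147/1000000::real) \<le> ln 2"
    by (rule le_ln_of_exp)
next
  have "(2::real) \<le> (\<Sum>m<10. (693148/1000000::real) ^ m / fact m)"
    by (simp add: lessThan_nat_numeral fact_numeral power_divide)
  also have "\<dots> \<le> exp (693148/1000000)"
    by (rule exp_lower_taylor) simp
  finally show "ln (2::real) \<le> 693148/1000000"
    by (rule ln_le_of_exp) simp_all
qed

lemma lnb_3: "(10986041/10000000::real) \<le> ln (3::real) \<and> ln (3::real) \<le> (10986213/10000000::real)"
proof -
  have rel: "real 12 * ln (3::real) + (\<Sum>(p,e)\<leftarrow>[]. real e * ln p) = (\<Sum>(p,e)\<leftarrow>[(2::real,19::nat)]. real e * ln p) + ln (531441/524288::real)"
    by (rule rel_ln) simp_all
  have b: "(3699066655/274877906944::real) \<le> ln (531441/524288::real) \<and> ln (531441/524288::real) \<le> (7153/524288::real)"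
    by (rule ln1p_pos) (simp_all add: power_divide)
  show ?thesis using rel b lnb_2 by (simp; linarith)
qed

lemma lnb_5: "(16094283/10000000::real) \<le> ln (5::real) \<and> ln (5::real) \<le> (4023609/2500000::real)"
proof -
  have rel: "real 8 * ln (5::real) + (\<Sum>(p,e)\<leftarrow>[]. real e * ln p) = (\<Sum>(p,e)\<leftarrow>[(2::real,17::nat), (3::real,1::nat)]. real e * ln p) + ln (390625/393216::real)"
    by (rule rel_ln) simp_all
  have b: "(-516124609/77309411328::real) \<le> ln (390625/393216::real) \<and> ln (390625/393216::real) \<le> (-2591/393216::real)"
    by (rule ln1p_neg) (simp_all add: power_divide)
  show ?thesis using rel b lnb_2 lnb_3 by (simp; linarith)
qed

lemma lnb_7: "(3891811/2000000::real) \<le> ln (7::real) \<and> ln (7::real) \<le> (9729577/5000000::real)"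
proof -
  have rel: "real 10 * ln (7::real) + (\<Sum>(p,e)\<leftarrow>[]. real e * ln p) = (\<Sum>(p,e)\<leftarrow>[(2::real,21::nat), (3::real,3::nat), (5::real,1::nat)]. real e * ln p) + ln (282475249/283115520::real)"
    by (rule rel_ln) simp_all
  have b: "(-91045275506401/40077198832435200::real) \<le> ln (282475249/283115520::real) \<and> ln (282475249/283115520::real) \<le> (-640271/283115520::real)"
    by (rule ln1p_neg) (simp_all add: power_divide)
  show ?thesis using rel b lnb_2 lnb_3 lnb_5 by (simp; linarith)
qed

lemma lnb_11: "(2997351/1250000::real) \<le> ln (11::real) \<and> ln (11::real) \<le> (1498691/625000::real)"
proof -
  have rel: "real 3 * ln (11::real) + (\<Sum>(p,e)\<leftarrow>[(3::real,1::nat)]. real e * ln p) = (\<Sum>(p,e)\<leftarrow>[(2::real,5::nat), (5::real,3::nat)]. real e * ln p) + ln (3993/4000::real)"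
    by (rule rel_ln) simp_all
  have b: "(-14049/8000000::real) \<le> ln (3993/4000::real) \<and> ln (3993/4000::real) \<le> (-7/4000::real)"
    by (rule ln1p_neg) (simp_all add: power_divide)
  show ?thesis using rel b lnb_2 lnb_3 lnb_5 by (simp; linarith)
qed

lemma lnb_13: "(25649423/10000000::real) \<le> ln (13::real) \<and> ln (13::real) \<le> (25649593/10000000::real)"
proof -
  have rel: "real 3 * ln (13::real) + (\<Sum>(p,e)\<leftarrow>[(5::real,1::nat)]. real e * ln p) = (\<Sum>(p,e)\<leftarrow>[(2::real,5::nat), (7::real,3::nat)]. real e * ln p) + ln (10985/10976::real)"
    by (rule rel_ln) simp_all
  have b: "(98703/120472576::real) \<le> ln (10985/10976::real) \<and> ln (10985/10976::real) \<le> (9/10976::real)"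
    by (rule ln1p_pos) (simp_all add: power_divide)
  show ?thesis using rel b lnb_2 lnb_5 lnb_7 by (simp; linarith)
qed

lemma lnb_17: "(1133281/400000::real) \<le> ln (17::real) \<and> ln (17::real) \<le> (442691/156250::real)"
proof -
  have rel: "real 3 * ln (17::real) + (\<Sum>(p,e)\<leftarrow>[]. real e * ln p) = (\<Sum>(p,e)\<leftarrow>[(2::real,2::nat), (5::real,2::nat), (7::real,2::nat)]. real e * ln p) + ln (4913/4900::real)"
    by (rule rel_ln) simp_all
  have b: "(63531/24010000::real) \<le> ln (4913/4900::real) \<and> ln (4913/4900::real) \<le> (13/4900::real)"
    by (rule ln1p_pos) (simp_all add: power_divide)
  show ?thesis using rel b lnb_2 lnb_5 lnb_7 by (simp; linarith)
qed

lemma lnb_19: "(29444309/10000000::real) \<le> ln (19::real) \<and> ln (19::real) \<le> (29444467/10000000::real)"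
proof -
  have rel: "real 3 * ln (19::real) + (\<Sum>(p,e)\<leftarrow>[]. real e * ln p) = (\<Sum>(p,e)\<leftarrow>[(2::real,2::nat), (5::real,1::nat), (7::real,3::nat)]. real e * ln p) + ln (6859/6860::real)"
    by (rule rel_ln) simp_all
  have b: "(-3431/23529800::real) \<le> ln (6859/6860::real) \<and> ln (6859/6860::real) \<le> (-1/6860::real)"
    by (rule ln1p_neg) (simp_all add: power_divide)
  show ?thesis using rel b lnb_2 lnb_5 lnb_7 by (simp; linarith)
qed

lemma lnb_23: "(15677439/5000000::real) \<le> ln (23::real) \<and> ln (23::real) \<le> (31355007/10000000::real)"
proof -
  have rel: "real 3 * ln (23::real) + (\<Sum>(p,e)\<leftarrow>[]. real e * ln p) = (\<Sum>(p,e)\<leftarrow>[(2::real,7::nat), (5::real,1::nat), (19::real,1::nat)]. real e * ln p) + ln (12167/12160::real)"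
    by (rule rel_ln) simp_all
  have b: "(85071/147865600::real) \<le> ln (12167/12160::real) \<and> ln (12167/12160::real) \<le> (7/12160::real)"
    by (rule ln1p_pos) (simp_all add: power_divide)
  show ?thesis using rel b lnb_2 lnb_5 lnb_19 by (simp; linarith)
qed

lemma lnb_29: "(8418223/2500000::real) \<le> ln (29::real) \<and> ln (29::real) \<le> (33673047/10000000::real)"
proof -
  have rel: "real 2 * ln (29::real) + (\<Sum>(p,e)\<leftarrow>[(7::real,1::nat)]. real e * ln p) = (\<Sum>(p,e)\<leftarrow>[(2::real,8::nat), (23::real,1::nat)]. real e * ln p) + ln (5887/5888::real)"
    by (rule rel_ln) simp_all
  have b: "(-2945/17334272::real) \<le> ln (5887/5888::real) \<and> ln (5887/5888::real) \<le> (-1/5888::real)"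
    by (rule ln1p_neg) (simp_all add: power_divide)
  show ?thesis using rel b lnb_2 lnb_7 lnb_23 by (simp; linarith)
qed

lemma lnb_31: "(34339811/10000000::real) \<le> ln (31::real) \<and> ln (31::real) \<le> (34339947/10000000::real)"
proof -
  have rel: "real 3 * ln (31::real) + (\<Sum>(p,e)\<leftarrow>[]. real e * ln p) = (\<Sum>(p,e)\<leftarrow>[(2::real,5::nat), (7::real,2::nat), (19::real,1::nat)]. real e * ln p) + ln (29791/29792::real)"
    by (rule rel_ln) simp_all
  have b: "(-14897/443781632::real) \<le> ln (29791/29792::real) \<and> ln (29791/29792::real) \<le> (-1/29792::real)"
    by (rule ln1p_neg) (simp_all add: power_divide)
  show ?thesis using rel b lnb_2 lnb_7 lnb_19 by (simp; linarith)
qed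

lemma lnb_37: "(36109071/10000000::real) \<le> ln (37::real) \<and> ln (37::real) \<le> (36109279/10000000::real)"
proof -
  have rel: "real 2 * ln (37::real) + (\<Sum>(p,e)\<leftarrow>[]. real e * ln p) = (\<Sum>(p,e)\<leftarrow>[(2::real,2::nat), (7::real,3::nat)]. real e * ln p) + ln (1369/1372::real)"
    by (rule rel_ln) simp_all
  have b: "(-2067/941192::real) \<le> ln (1369/1372::real) \<and> ln (1369/1372::real) \<le> (-3/1372::real)"
    by (rule ln1p_neg) (simp_all add: power_divide)
  show ?thesis using rel b lnb_2 lnb_7 by (simp; linarith)
qed

lemma lnb_41: "(742713/200000::real) \<le> ln (41::real) \<and> ln (41::real) \<le> (7427163/2000000::real)"
proof -
  have rel: "real 2 * ln (41::real) + (\<Sum>(p,e)\<leftarrow>[]. real e * ln p) = (\<Sum>(p,e)\<leftarrow>[(2::real,1::nat), (29::real,2::nat)]. real e * ln p) + ln (1681/1682::real)"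
    by (rule rel_ln) simp_all
  have b: "(-421/707281::real) \<le> ln (1681/1682::real) \<and> ln (1681/1682::real) \<le> (-1/1682::real)"
    by (rule ln1p_neg) (simp_all add: power_divide)
  show ?thesis using rel b lnb_2 lnb_29 by (simp; linarith)
qed

lemma lnb_43: "(37611893/10000000::real) \<le> ln (43::real) \<and> ln (43::real) \<le> (37612133/10000000::real)"
proof -
  have rel: "real 3 * ln (43::real) + (\<Sum>(p,e)\<leftarrow>[]. real e * ln p) = (\<Sum>(p,e)\<leftarrow>[(2::real,7::nat), (3::real,3::nat), (23::real,1::nat)]. real e * ln p) + ln (79507/79488::real)"
    by (rule rel_ln) simp_all
  have b: "(1509911/6318342144::real) \<le> ln (79507/79488::real) \<and> ln (79507/79488::real) \<le> (19/79488::real)"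
    by (rule ln1p_pos) (simp_all add: power_divide)
  show ?thesis using rel b lnb_2 lnb_3 lnb_23 by (simp; linarith)
qed

lemma lnb_47: "(38501397/10000000::real) \<le> ln (47::real) \<and> ln (47::real) \<le> (1540063/400000::real)"
proof -
  have rel: "real 2 * ln (47::real) + (\<Sum>(p,e)\<leftarrow>[]. real e * ln p) = (\<Sum>(p,e)\<leftarrow>[(2::real,5::nat), (3::real,1::nat), (23::real,1::nat)]. real e * ln p) + ln (2209/2208::real)"
    by (rule rel_ln) simp_all
  have b: "(2207/4875264::real) \<le> ln (2209/2208::real) \<and> ln (2209/2208::real) \<le> (1/2208::real)"
    by (rule ln1p_pos) (simp_all add: power_divide)
  show ?thesis using rel b lnb_2 lnb_3 lnb_23 by (simp; linarith)
qed

lemma lnb_53: "(9925709/2500000::real) \<le> ln (53::real) \<and> ln (53::real) \<le> (39703017/10000000::real)"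
proof -
  have rel: "real 3 * ln (53::real) + (\<Sum>(p,e)\<leftarrow>[]. real e * ln p) = (\<Sum>(p,e)\<leftarrow>[(2::real,1::nat), (7::real,4::nat), (31::real,1::nat)]. real e * ln p) + ln (148877/148862::real)"
    by (rule rel_ln) simp_all
  have b: "(2232705/22159895044::real) \<le> ln (148877/148862::real) \<and> ln (148877/148862::real) \<le> (15/148862::real)"
    by (rule ln1p_pos) (simp_all add: power_divide)
  show ?thesis using rel b lnb_2 lnb_7 lnb_31 by (simp; linarith)
qed

lemma lnb_59: "(40775267/10000000::real) \<le> ln (59::real) \<and> ln (59::real) \<le> (40775477/10000000::real)"
proof -
  have rel: "real 3 * ln (59::real) + (\<Sum>(p,e)\<leftarrow>[]. real e * ln p) = (\<Sum>(p,e)\<leftarrow>[(2::real,1::nat), (5::real,1::nat), (19::real,1::nat), (23::real,1::nat), (47::real,1::nat)]. real e * ln p) + ln (205379/205390::real)"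
    by (rule rel_ln) simp_all
  have b: "(-564883/10546263025::real) \<le> ln (205379/205390::real) \<and> ln (205379/205390::real) \<le> (-11/205390::real)"
    by (rule ln1p_neg) (simp_all add: power_divide)
  show ?thesis using rel b lnb_2 lnb_5 lnb_19 lnb_23 lnb_47 by (simp; linarith)
qed

lemma lnb_61: "(8221729/2000000::real) \<le> ln (61::real) \<and> ln (61::real) \<le> (1027721/250000::real)"
proof -
  have rel: "real 2 * ln (61::real) + (\<Sum>(p,e)\<leftarrow>[]. real e * ln p) = (\<Sum>(p,e)\<leftarrow>[(2::real,2::nat), (7::real,2::nat), (19::real,1::nat)]. real e * ln p) + ln (3721/3724::real)"
    by (rule rel_ln) simp_all
  have b: "(-5595/6934088::real) \<le> ln (3721/3724::real) \<and> ln (3721/3724::real) \<le> (-3/3724::real)"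
    by (rule ln1p_neg) (simp_all add: power_divide)
  show ?thesis using rel b lnb_2 lnb_7 lnb_19 by (simp; linarith)
qed

lemma lnb_67: "(4204683/1000000::real) \<le> ln (67::real) \<and> ln (67::real) \<le> (42047019/10000000::real)"
proof -
  have rel: "real 3 * ln (67::real) + (\<Sum>(p,e)\<leftarrow>[]. real e * ln p) = (\<Sum>(p,e)\<leftarrow>[(2::real,8::nat), (5::real,2::nat), (47::real,1::nat)]. real e * ln p) + ln (300763/300800::real)"
    by (rule rel_ln) simp_all
  have b: "(-5566169/45240320000::real) \<le> ln (300763/300800::real) \<and> ln (300763/300800::real) \<le> (-37/300800::real)"
    by (rule ln1p_neg) (simp_all add: power_divide)
  show ?thesis using rel b lnb_2 lnb_5 lnb_47 by (simp; linarith)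
qed

lemma lnb_71: "(21313367/5000000::real) \<le> ln (71::real) \<and> ln (71::real) \<le> (426269/100000::real)"
proof -
  have rel: "real 2 * ln (71::real) + (\<Sum>(p,e)\<leftarrow>[(13::real,1::nat)]. real e * ln p) = (\<Sum>(p,e)\<leftarrow>[(2::real,16::nat)]. real e * ln p) + ln (65533/65536::real)"
    by (rule rel_ln) simp_all
  have b: "(-98313/2147483648::real) \<le> ln (65533/65536::real) \<and> ln (65533/65536::real) \<le> (-3/65536::real)"
    by (rule ln1p_neg) (simp_all add: power_divide)
  show ?thesis using rel b lnb_2 lnb_13 by (simp; linarith)
qed

lemma lnb_73: "(21452237/5000000::real) \<le> ln (73::real) \<and> ln (73::real) \<le> (10726181/2500000::real)"
proof -
  have rel: "real 2 * ln (73::real) + (\<Sum>(p,e)\<leftarrow>[]. real e * ln p) = (\<Sum>(p,e)\<leftarrow>[(2::real,1::nat), (5::real,1::nat), (13::real,1::nat), (41::real,1::nat)]. real e * ln p) + ln (5329/5330::real)"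
    by (rule rel_ln) simp_all
  have b: "(-1333/7102225::real) \<le> ln (5329/5330::real) \<and> ln (5329/5330::real) \<le> (-1/5330::real)"
    by (rule ln1p_neg) (simp_all add: power_divide)
  show ?thesis using rel b lnb_2 lnb_5 lnb_13 lnb_41 by (simp; linarith)
qed

lemma lnb_79: "(43694389/10000000::real) \<le> ln (79::real) \<and> ln (79::real) \<le> (43694567/10000000::real)"
proof -
  have rel: "real 3 * ln (79::real) + (\<Sum>(p,e)\<leftarrow>[]. real e * ln p) = (\<Sum>(p,e)\<leftarrow>[(2::real,6::nat), (5::real,1::nat), (23::real,1::nat), (67::real,1::nat)]. real e * ln p) + ln (493039/493120::real)"
    by (rule rel_ln) simp_all
  have b: "(-19977921/121583667200::real) \<le> ln (493039/493120::real) \<and> ln (493039/493120::real) \<le> (-81/493120::real)"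
    by (rule ln1p_neg) (simp_all add: power_divide)
  show ?thesis using rel b lnb_2 lnb_5 lnb_23 lnb_67 by (simp; linarith)
qed

lemma lnb_83: "(44188307/10000000::real) \<le> ln (83::real) \<and> ln (83::real) \<le> (44188529/10000000::real)"
proof -
  have rel: "real 3 * ln (83::real) + (\<Sum>(p,e)\<leftarrow>[]. real e * ln p) = (\<Sum>(p,e)\<leftarrow>[(2::real,2::nat), (3::real,1::nat), (29::real,1::nat), (31::real,1::nat), (53::real,1::nat)]. real e * ln p) + ln (571787/571764::real)"
    by (rule rel_ln) simp_all
  have b: "(13150043/326914071696::real) \<le> ln (571787/571764::real) \<and> ln (571787/571764::real) \<le> (23/571764::real)"
    by (rule ln1p_pos) (simp_all add: power_divide)
  show ?thesis using rel b lnb_2 lnb_3 lnb_29 lnb_31 lnb_53 by (simp; linarith)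
qed

lemma lnb_89: "(1795451/400000::real) \<le> ln (89::real) \<and> ln (89::real) \<le> (1122163/250000::real)"
proof -
  have rel: "real 1 * ln (89::real) + (\<Sum>(p,e)\<leftarrow>[(23::real,1::nat)]. real e * ln p) = (\<Sum>(p,e)\<leftarrow>[(2::real,11::nat)]. real e * ln p) + ln (2047/2048::real)"
    by (rule rel_ln) simp_all
  have b: "(-1025/2097152::real) \<le> ln (2047/2048::real) \<and> ln (2047/2048::real) \<le> (-1/2048::real)"
    by (rule ln1p_neg) (simp_all add: power_divide)
  show ?thesis using rel b lnb_2 lnb_23 by (simp; linarith)
qed

lemma lnb_97: "(5718377/1250000::real) \<le> ln (97::real) \<and> ln (97::real) \<le> (1429601/312500::real)"
proof -
  have rel: "real 2 * ln (97::real) + (\<Sum>(p,e)\<leftarrow>[]. real e * ln p) = (\<Sum>(p,e)\<leftarrow>[(2::real,6::nat), (3::real,1::nat), (7::real,2::nat)]. real e * ln p) + ln (9409/9408::real)"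
    by (rule rel_ln) simp_all
  have b: "(9407/88510464::real) \<le> ln (9409/9408::real) \<and> ln (9409/9408::real) \<le> (1/9408::real)"
    by (rule ln1p_pos) (simp_all add: power_divide)
  show ?thesis using rel b lnb_2 lnb_3 lnb_7 by (simp; linarith)
qed

lemma lnb_101: "(46151059/10000000::real) \<le> ln (101::real) \<and> ln (101::real) \<le> (11537833/2500000::real)"
proof -
  have rel: "real 3 * ln (101::real) + (\<Sum>(p,e)\<leftarrow>[]. real e * ln p) = (\<Sum>(p,e)\<leftarrow>[(5::real,1::nat), (17::real,2::nat), (23::real,1::nat), (31::real,1::nat)]. real e * ln p) + ln (1030301/1030285::real)"
    by (rule rel_ln) simp_all
  have b: "(16484304/1061487181225::real) \<le> ln (1030301/1030285::real) \<and> ln (1030301/1030285::real) \<le> (16/1030285::real)"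
    by (rule ln1p_pos) (simp_all add: power_divide)
  show ?thesis using rel b lnb_5 lnb_17 lnb_23 lnb_31 by (simp; linarith)
qed

lemma lnb_103: "(5793399/1250000::real) \<le> ln (103::real) \<and> ln (103::real) \<le> (11586851/2500000::real)"
proof -
  have rel: "real 3 * ln (103::real) + (\<Sum>(p,e)\<leftarrow>[]. real e * ln p) = (\<Sum>(p,e)\<leftarrow>[(2::real,3::nat), (7::real,1::nat), (13::real,1::nat), (19::real,1::nat), (79::real,1::nat)]. real e * ln p) + ln (1092727/1092728::real)"
    by (rule rel_ln) simp_all
  have b: "(-546365/597027240992::real) \<le> ln (1092727/1092728::real) \<and> ln (1092727/1092728::real) \<le> (-1/1092728::real)"
    by (rule ln1p_neg) (simp_all add: power_divide)
  show ?thesis using rel b lnb_2 lnb_7 lnb_13 lnb_19 lnb_79 by (simp; linarith)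
qed

lemma lnb_107: "(5841023/1250000::real) \<le> ln (107::real) \<and> ln (107::real) \<le> (46728417/10000000::real)"
proof -
  have rel: "real 3 * ln (107::real) + (\<Sum>(p,e)\<leftarrow>[(3::real,1::nat)]. real e * ln p) = (\<Sum>(p,e)\<leftarrow>[(2::real,10::nat), (37::real,1::nat), (97::real,1::nat)]. real e * ln p) + ln (3675129/3675136::real)"
    by (rule rel_ln) simp_all
  have b: "(-12863025/6753312309248::real) \<le> ln (3675129/3675136::real) \<and> ln (3675129/3675136::real) \<le> (-7/3675136::real)"
    by (rule ln1p_neg) (simp_all add: power_divide)
  show ?thesis using rel b lnb_2 lnb_3 lnb_37 lnb_97 by (simp; linarith)
qed

lemma lnb_109: "(46913367/10000000::real) \<le> ln (109::real) \<and> ln (109::real) \<le> (11728401/2500000::real)"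
proof -
  have rel: "real 3 * ln (109::real) + (\<Sum>(p,e)\<leftarrow>[]. real e * ln p) = (\<Sum>(p,e)\<leftarrow>[(2::real,6::nat), (3::real,1::nat), (5::real,1::nat), (19::real,1::nat), (71::real,1::nat)]. real e * ln p) + ln (1295029/1295040::real)"
    by (rule rel_ln) simp_all
  have b: "(-7122841/838564300800::real) \<le> ln (1295029/1295040::real) \<and> ln (1295029/1295040::real) \<le> (-11/1295040::real)"
    by (rule ln1p_neg) (simp_all add: power_divide)
  show ?thesis using rel b lnb_2 lnb_3 lnb_5 lnb_19 lnb_71 by (simp; linarith)
qed

lemma lnb_113: "(47273769/10000000::real) \<le> ln (113::real) \<and> ln (113::real) \<le> (47274009/10000000::real)"
proof -
  have rel: "real 2 * ln (113::real) + (\<Sum>(p,e)\<leftarrow>[]. real e * ln p) = (\<Sum>(p,e)\<leftarrow>[(2::real,5::nat), (3::real,1::nat), (7::real,1::nat), (19::real,1::nat)]. real e * ln p) + ln (12769/12768::real)"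
    by (rule rel_ln) simp_all
  have b: "(12767/163021824::real) \<le> ln (12769/12768::real) \<and> ln (12769/12768::real) \<le> (1/12768::real)"
    by (rule ln1p_pos) (simp_all add: power_divide)
  show ?thesis using rel b lnb_2 lnb_3 lnb_7 lnb_19 by (simp; linarith)
qed

lemma lnb_127: "(24220879/5000000::real) \<le> ln (127::real) \<and> ln (127::real) \<le> (6055249/1250000::real)"
proof -
  have rel: "real 2 * ln (127::real) + (\<Sum>(p,e)\<leftarrow>[]. real e * ln p) = (\<Sum>(p,e)\<leftarrow>[(2::real,2::nat), (37::real,1::nat), (109::real,1::nat)]. real e * ln p) + ln (16129/16132::real)"
    by (rule rel_ln) simp_all
  have b: "(-24207/130120712::real) \<le> ln (16129/16132::real) \<and> ln (16129/16132::real) \<le> (-3/16132::real)"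
    by (rule ln1p_neg) (simp_all add: power_divide)
  show ?thesis using rel b lnb_2 lnb_37 lnb_109 by (simp; linarith)
qed

lemma lnb_131: "(48751881/10000000::real) \<le> ln (131::real) \<and> ln (131::real) \<le> (9750417/2000000::real)"
proof -
  have rel: "real 2 * ln (131::real) + (\<Sum>(p,e)\<leftarrow>[]. real e * ln p) = (\<Sum>(p,e)\<leftarrow>[(2::real,4::nat), (29::real,1::nat), (37::real,1::nat)]. real e * ln p) + ln (17161/17168::real)"
    by (rule rel_ln) simp_all
  have b: "(-60137/147370112::real) \<le> ln (17161/17168::real) \<and> ln (17161/17168::real) \<le> (-7/17168::real)"
    by (rule ln1p_neg) (simp_all add: power_divide)
  show ?thesis using rel b lnb_2 lnb_29 lnb_37 by (simp; linarith)
qed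

lemma lnb_137: "(49199691/10000000::real) \<le> ln (137::real) \<and> ln (137::real) \<le> (9839989/2000000::real)"
proof -
  have rel: "real 2 * ln (137::real) + (\<Sum>(p,e)\<leftarrow>[]. real e * ln p) = (\<Sum>(p,e)\<leftarrow>[(2::real,2::nat), (13::real,1::nat), (19::real,2::nat)]. real e * ln p) + ln (18769/18772::real)"
    by (rule rel_ln) simp_all
  have b: "(-28167/176193992::real) \<le> ln (18769/18772::real) \<and> ln (18769/18772::real) \<le> (-3/18772::real)"
    by (rule ln1p_neg) (simp_all add: power_divide)
  show ?thesis using rel b lnb_2 lnb_13 lnb_19 by (simp; linarith)
qed

lemma lnb_139: "(24672313/5000000::real) \<le> ln (139::real) \<and> ln (139::real) \<le> (49344871/10000000::real)"
proof -
  have rel: "real 3 * ln (139::real) + (\<Sum>(p,e)\<leftarrow>[]. real e * ln p) = (\<Sum>(p,e)\<leftarrow>[(2::real,3::nat), (7::real,2::nat), (13::real,1::nat), (17::real,1::nat), (31::real,1::nat)]. real e * ln p) + ln (2685619/2685592::real)"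
    by (rule rel_ln) simp_all
  have b: "(72510255/7212404390464::real) \<le> ln (2685619/2685592::real) \<and> ln (2685619/2685592::real) \<le> (27/2685592::real)"
    by (rule ln1p_pos) (simp_all add: power_divide)
  show ?thesis using rel b lnb_2 lnb_7 lnb_13 lnb_17 lnb_31 by (simp; linarith)
qed

lemma lnb_149: "(50039357/10000000::real) \<le> ln (149::real) \<and> ln (149::real) \<le> (50039583/10000000::real)"
proof -
  have rel: "real 3 * ln (149::real) + (\<Sum>(p,e)\<leftarrow>[]. real e * ln p) = (\<Sum>(p,e)\<leftarrow>[(2::real,2::nat), (7::real,1::nat), (31::real,1::nat), (37::real,1::nat), (103::real,1::nat)]. real e * ln p) + ln (3307949/3307948::real)"
    by (rule rel_ln) simp_all
  have b: "(3307947/10942519970704::real) \<le> ln (3307949/3307948::real) \<and> ln (3307949/3307948::real) \<le> (1/3307948::real)"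
    by (rule ln1p_pos) (simp_all add: power_divide)
  show ?thesis using rel b lnb_2 lnb_7 lnb_31 lnb_37 lnb_103 by (simp; linarith)
qed

lemma lnb_151: "(50172677/10000000::real) \<le> ln (151::real) \<and> ln (151::real) \<le> (50172931/10000000::real)"
proof -
  have rel: "real 3 * ln (151::real) + (\<Sum>(p,e)\<leftarrow>[]. real e * ln p) = (\<Sum>(p,e)\<leftarrow>[(17::real,1::nat), (31::real,1::nat), (47::real,1::nat), (139::real,1::nat)]. real e * ln p) + ln (3442951/3442891::real)"
    by (rule rel_ln) simp_all
  have b: "(206569860/11853498437881::real) \<le> ln (3442951/3442891::real) \<and> ln (3442951/3442891::real) \<le> (60/3442891::real)"
    by (rule ln1p_pos) (simp_all add: power_divide)
  show ?thesis using rel b lnb_17 lnb_31 lnb_47 lnb_139 by (simp; linarith)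
qed

lemma lnb_157: "(50562337/10000000::real) \<le> ln (157::real) \<and> ln (157::real) \<le> (50562589/10000000::real)"
proof -
  have rel: "real 3 * ln (157::real) + (\<Sum>(p,e)\<leftarrow>[]. real e * ln p) = (\<Sum>(p,e)\<leftarrow>[(2::real,4::nat), (5::real,1::nat), (13::real,1::nat), (61::real,2::nat)]. real e * ln p) + ln (3869893/3869840::real)"
    by (rule rel_ln) simp_all
  have b: "(205098711/14975661625600::real) \<le> ln (3869893/3869840::real) \<and> ln (3869893/3869840::real) \<le> (53/3869840::real)"
    by (rule ln1p_pos) (simp_all add: power_divide)
  show ?thesis using rel b lnb_2 lnb_5 lnb_13 lnb_61 by (simp; linarith)
qed

lemma lnb_163: "(50937381/10000000::real) \<le> ln (163::real) \<and> ln (163::real) \<le> (50937651/10000000::real)"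
proof -
  have rel: "real 2 * ln (163::real) + (\<Sum>(p,e)\<leftarrow>[]. real e * ln p) = (\<Sum>(p,e)\<leftarrow>[(2::real,2::nat), (7::real,1::nat), (13::real,1::nat), (73::real,1::nat)]. real e * ln p) + ln (26569/26572::real)"
    by (rule rel_ln) simp_all
  have b: "(-39867/353035592::real) \<le> ln (26569/26572::real) \<and> ln (26569/26572::real) \<le> (-3/26572::real)"
    by (rule ln1p_neg) (simp_all add: power_divide)
  show ?thesis using rel b lnb_2 lnb_7 lnb_13 lnb_73 by (simp; linarith)
qed

lemma lnb_167: "(2558991/500000::real) \<le> ln (167::real) \<and> ln (167::real) \<le> (6397511/1250000::real)"
proof -
  have rel: "real 2 * ln (167::real) + (\<Sum>(p,e)\<leftarrow>[]. real e * ln p) = (\<Sum>(p,e)\<leftarrow>[(2::real,4::nat), (3::real,1::nat), (7::real,1::nat), (83::real,1::nat)]. real e * ln p) + ln (27889/27888::real)"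
    by (rule rel_ln) simp_all
  have b: "(27887/777740544::real) \<le> ln (27889/27888::real) \<and> ln (27889/27888::real) \<le> (1/27888::real)"
    by (rule ln1p_pos) (simp_all add: power_divide)
  show ?thesis using rel b lnb_2 lnb_3 lnb_7 lnb_83 by (simp; linarith)
qed

lemma lnb_173: "(51532771/10000000::real) \<le> ln (173::real) \<and> ln (173::real) \<le> (51533061/10000000::real)"
proof -
  have rel: "real 2 * ln (173::real) + (\<Sum>(p,e)\<leftarrow>[]. real e * ln p) = (\<Sum>(p,e)\<leftarrow>[(2::real,1::nat), (5::real,1::nat), (41::real,1::nat), (73::real,1::nat)]. real e * ln p) + ln (29929/29930::real)"
    by (rule rel_ln) simp_all
  have b: "(-7483/223951225::real) \<le> ln (29929/29930::real) \<and> ln (29929/29930::real) \<le> (-1/29930::real)"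
    by (rule ln1p_neg) (simp_all add: power_divide)
  show ?thesis using rel b lnb_2 lnb_5 lnb_41 lnb_73 by (simp; linarith)
qed

definition Qlist :: "nat list" where "Qlist = [2, 3, 5, 7, 11, 13, 17, 19, 23, 29, 31, 37, 41, 43, 47, 53, 59, 61, 67, 71, 73, 79, 83, 89, 97, 101, 103, 107, 109, 113, 127, 131, 137, 139, 149, 151, 157, 163, 167]"

lemma prime_by_trial:
  fixes p s :: nat
  assumes p1: "1 < p" and nd: "\<forall>d\<in>{2..<Suc s}. \<not> d dvd p" and ps: "p < (Suc s) * (Suc s)"
  shows "prime p"
proof (rule ccontr)
  assume np: "\<not> prime p"
  then obtain d where d: "d dvd p" "d \<noteq> 1" "d \<noteq> p" using p1 prime_nat_iff by blast
  obtain e where e: "p = d * e" using d(1) by blast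
  have d0: "d > 1" using d p1 e by (cases d) auto
  have e1: "e > 1" using d p1 e by (cases e) auto
  have "e dvd p" using e by simp
  show False
  proof (cases "d \<le> e")
    case True
    have "d \<le> s"
    proof (rule ccontr)
      assume "\<not> d \<le> s"
      then have "Suc s \<le> d" "Suc s \<le> e" using True by auto
      then have "Suc s * Suc s \<le> d * e" by (rule mult_le_mono)
      then show False using ps e by simp
    qed
    then show False using nd d0 d(1) by auto
  next
    case False
    have "e \<le> s"
    proof (rule ccontr)
      assume "\<not> e \<le> s"
      then have "Suc s \<le> d" "Suc s \<le> e" using False by auto
      then have "Suc s * Suc s \<le> d * e" by (rule mult_le_mono)
      then show False using ps e by simp
    qed
    then show False using nd e1 \<open>e dvd p\<close> by auto
  qed
qed

lemma prime_2: "prime (2::nat)"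
  by (rule prime_by_trial[where s=1]) (simp_all add: atLeastLessThan_nat_numeral)

lemma prime_3: "prime (3::nat)"
  by (rule prime_by_trial[where s=1]) (simp_all add: atLeastLessThan_nat_numeral)

lemma prime_5: "prime (5::nat)"
  by (rule prime_by_trial[where s=2]) (simp_all add: atLeastLessThan_nat_numeral)

lemma prime_7: "prime (7::nat)"
  by (rule prime_by_trial[where s=2]) (simp_all add: atLeastLessThan_nat_numeral)

lemma prime_11: "prime (11::nat)"
  by (rule prime_by_trial[where s=3]) (simp_all add: atLeastLessThan_nat_numeral)

lemma prime_13: "prime (13::nat)"
  by (rule prime_by_trial[where s=3]) (simp_all add: atLeastLessThan_nat_numeral)

lemma prime_17: "prime (17::nat)"
  by (rule prime_by_trial[where s=4]) (simp_all add: atLeastLessThan_nat_numeral)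

lemma prime_19: "prime (19::nat)"
  by (rule prime_by_trial[where s=4]) (simp_all add: atLeastLessThan_nat_numeral)

lemma prime_23: "prime (23::nat)"
  by (rule prime_by_trial[where s=4]) (simp_all add: atLeastLessThan_nat_numeral)

lemma prime_29: "prime (29::nat)"
  by (rule prime_by_trial[where s=5]) (simp_all add: atLeastLessThan_nat_numeral)

lemma prime_31: "prime (31::nat)"
  by (rule prime_by_trial[where s=5]) (simp_all add: atLeastLessThan_nat_numeral)

lemma prime_37: "prime (37::nat)"
  by (rule prime_by_trial[where s=6]) (simp_all add: atLeastLessThan_nat_numeral)

lemma prime_41: "prime (41::nat)"
  by (rule prime_by_trial[where s=6]) (simp_all add: atLeastLessThan_nat_numeral)

lemma prime_43: "prime (43::nat)"
  by (rule prime_by_trial[where s=6]) (simp_all add: atLeastLessThan_nat_numeral)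

lemma prime_47: "prime (47::nat)"
  by (rule prime_by_trial[where s=6]) (simp_all add: atLeastLessThan_nat_numeral)

lemma prime_53: "prime (53::nat)"
  by (rule prime_by_trial[where s=7]) (simp_all add: atLeastLessThan_nat_numeral)

lemma prime_59: "prime (59::nat)"
  by (rule prime_by_trial[where s=7]) (simp_all add: atLeastLessThan_nat_numeral)

lemma prime_61: "prime (61::nat)"
  by (rule prime_by_trial[where s=7]) (simp_all add: atLeastLessThan_nat_numeral)

lemma prime_67: "prime (67::nat)"
  by (rule prime_by_trial[where s=8]) (simp_all add: atLeastLessThan_nat_numeral)

lemma prime_71: "prime (71::nat)"
  by (rule prime_by_trial[where s=8]) (simp_all add: atLeastLessThan_nat_numeral)

lemma prime_73: "prime (73::nat)"
  by (rule prime_by_trial[where s=8]) (simp_all add: atLeastLessThan_nat_numeral)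

lemma prime_79: "prime (79::nat)"
  by (rule prime_by_trial[where s=8]) (simp_all add: atLeastLessThan_nat_numeral)

lemma prime_83: "prime (83::nat)"
  by (rule prime_by_trial[where s=9]) (simp_all add: atLeastLessThan_nat_numeral)

lemma prime_89: "prime (89::nat)"
  by (rule prime_by_trial[where s=9]) (simp_all add: atLeastLessThan_nat_numeral)

lemma prime_97: "prime (97::nat)"
  by (rule prime_by_trial[where s=9]) (simp_all add: atLeastLessThan_nat_numeral)

lemma prime_101: "prime (101::nat)"
  by (rule prime_by_trial[where s=10]) (simp_all add: atLeastLessThan_nat_numeral)

lemma prime_103: "prime (103::nat)"
  by (rule prime_by_trial[where s=10]) (simp_all add: atLeastLessThan_nat_numeral)

lemma prime_107: "prime (107::nat)"
  by (rule prime_by_trial[where s=10]) (simp_all add: atLeastLessThan_nat_numeral)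

lemma prime_109: "prime (109::nat)"
  by (rule prime_by_trial[where s=10]) (simp_all add: atLeastLessThan_nat_numeral)

lemma prime_113: "prime (113::nat)"
  by (rule prime_by_trial[where s=10]) (simp_all add: atLeastLessThan_nat_numeral)

lemma prime_127: "prime (127::nat)"
  by (rule prime_by_trial[where s=11]) (simp_all add: atLeastLessThan_nat_numeral)

lemma prime_131: "prime (131::nat)"
  by (rule prime_by_trial[where s=11]) (simp_all add: atLeastLessThan_nat_numeral)

lemma prime_137: "prime (137::nat)"
  by (rule prime_by_trial[where s=11]) (simp_all add: atLeastLessThan_nat_numeral)

lemma prime_139: "prime (139::nat)"
  by (rule prime_by_trial[where s=11]) (simp_all add: atLeastLessThan_nat_numeral)

lemma prime_149: "prime (149::nat)"
  by (rule prime_by_trial[where s=12]) (simp_all add: atLeastLessThan_nat_numeral)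

lemma prime_151: "prime (151::nat)"
  by (rule prime_by_trial[where s=12]) (simp_all add: atLeastLessThan_nat_numeral)

lemma prime_157: "prime (157::nat)"
  by (rule prime_by_trial[where s=12]) (simp_all add: atLeastLessThan_nat_numeral)

lemma prime_163: "prime (163::nat)"
  by (rule prime_by_trial[where s=12]) (simp_all add: atLeastLessThan_nat_numeral)

lemma prime_167: "prime (167::nat)"
  by (rule prime_by_trial[where s=12]) (simp_all add: atLeastLessThan_nat_numeral)

lemma Qlist_primes: "\<forall>p\<in>set Qlist. prime p"
  unfolding Qlist_def by (simp add: prime_2 prime_3 prime_5 prime_7 prime_11 prime_13 prime_17 prime_19 prime_23 prime_29 prime_31 prime_37 prime_41 prime_43 prime_47 prime_53 prime_59 prime_61 prime_67 prime_71 prime_73 prime_79 prime_83 prime_89 prime_97 prime_101 prime_103 prime_107 prime_109 prime_113 prime_127 prime_131 prime_137 prime_139 prime_149 prime_151 prime_157 prime_163 prime_167)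

lemma small_nonprimes: "\<forall>p\<in>{..<173}. p \<in> set Qlist \<or> p < 2 \<or> (\<exists>d\<in>{2,3,5,7,11,13}. d dvd p \<and> d < p)"
  unfolding Qlist_def by (simp add: lessThan_nat_numeral)

lemma fpp_0: "fpp p 0 = 1" by (simp add: fpp_def)
lemma fpp_Suc: "fpp p (Suc a) = fpp p a + 1 / real p ^ Suc a" by (simp add: fpp_def)
lemma fpp_1: "fpp p 1 = 1 + 1 / real p" by (simp add: fpp_def)
lemma fpp_numeral: "fpp p (numeral k) = fpp p (pred_numeral k) + 1 / real p ^ numeral k"
  by (simp add: numeral_eq_Suc fpp_Suc)

lemma fpp_pos: "fpp p a \<ge> 1"
  by (induction a) (simp_all add: fpp_0 fpp_Suc add_increasing2)

lemma geom_le: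
  fixes x :: real
  assumes "0 \<le> x" "x < 1"
  shows "(\<Sum>i\<le>a. x ^ i) \<le> 1 / (1 - x)"
proof -
  have "(\<Sum>i\<le>a. x ^ i) = (\<Sum>i<Suc a. x ^ i)" by (simp add: lessThan_Suc_atMost)
  also have "\<dots> = (x ^ Suc a - 1) / (x - 1)" by (rule geometric_sum) (use assms in simp)
  also have "\<dots> = (1 - x ^ Suc a) / (1 - x)"
    by (metis minus_diff_eq minus_divide_divide)
  also have "\<dots> \<le> 1 / (1 - x)"
    using assms by (intro divide_right_mono) simp_all
  finally show ?thesis .
qed

lemma fpp_le:
  assumes p: "2 \<le> p"
  shows "fpp p a \<le> real p / (real p - 1)"
proof -
  have p1: "real p > 1" using p by simp
  have "fpp p a = (\<Sum>i\<le>a. (1 / real p) ^ i)" by (simp add: fpp_def power_one_over)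
  also have "\<dots> \<le> 1 / (1 - 1 / real p)"
    using p1 by (intro geom_le) simp_all
  also have "\<dots> = real p / (real p - 1)" using p1 by (simp add: field_simps)
  finally show ?thesis .
qed

lemma tail_bound:
  assumes p: "2 \<le> p" and W: "1 \<le> W" and A: "A \<le> a"
  shows "fpp p a / W ^ a \<le> (real p / (real p - 1)) / W ^ A"
proof -
  have WA: "W ^ A \<le> W ^ a" by (rule power_increasing[OF A W])
  have pA: "W ^ A > 0" using W by simp
  have f0: "fpp p a \<ge> 0" using fpp_pos[of p a] by simp
  have "fpp p a / W ^ a \<le> fpp p a / W ^ A"
    using WA pA f0 by (intro divide_left_mono) simp_all
  also have "\<dots> \<le> (real p / (real p - 1)) / W ^ A"
    using fpp_le[OF p] pA by (intro divide_right_mono) simp_all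
  finally show ?thesis .
qed

definition theta :: real where "theta = 499703/500000"

definition Ebound :: real where "Ebound = 122226349/100000000"

definition lo :: "nat \<Rightarrow> real" where
  "lo p = (if p = 2 then 693147/1000000 else if p = 3 then 10986041/10000000 else if p = 5 then 16094283/10000000 else if p = 7 then 3891811/2000000 else if p = 11 then 2997351/1250000 else if p = 13 then 25649423/10000000 else if p = 17 then 1133281/400000 else if p = 19 then 29444309/10000000 else if p = 23 then 15677439/5000000 else if p = 29 then 8418223/2500000 else if p = 31 then 34339811/10000000 else if p = 37 then 36109071/10000000 else if p = 41 then 742713/200000 else if p = 43 then 37611893/10000000 else if p = 47 then 38501397/10000000 else if p = 53 then 9925709/2500000 else if p = 59 then 40775267/10000000 else if p = 61 then 8221729/2000000 else if p = 67 then 4204683/1000000 else if p = 71 then 21313367/5000000 else if p = 73 then 21452237/5000000 else if p = 79 then 43694389/10000000 else if p = 83 then 44188307/10000000 else if p = 89 then 1795451/400000 else if p = 97 then 5718377/1250000 else if p = 101 then 46151059/10000000 else if p = 103 then 5793399/1250000 else if p = 107 then 5841023/1250000 else if p = 109 then 46913367/10000000 else if p = 113 then 47273769/10000000 else if p = 127 then 24220879/5000000 else if p = 131 then 48751881/10000000 else if p = 137 then 49199691/10000000 else if p = 139 then 24672313/5000000 else if p = 149 then 50039357/10000000 else if p = 151 then 50172677/10000000 else if p = 157 then 50562337/10000000 else if p = 163 then 50937381/10000000 else if p = 167 then 2558991/500000 else 51532771/10000000)"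

definition w :: "nat \<Rightarrow> real" where
  "w p = (if p = 2 then 50045803/50000000 else if p = 3 then 100145231/100000000 else if p = 5 then 3131651/3125000 else if p = 7 then 20051477/20000000 else if p = 11 then 50158631/50000000 else if p = 13 then 100339403/100000000 else if p = 17 then 100374967/100000000 else if p = 19 then 25097429/25000000 else if p = 23 then 6275941/6250000 else if p = 29 then 100445809/100000000 else if p = 31 then 100454659/100000000 else if p = 37 then 100478139/100000000 else if p = 41 then 50245883/50000000 else if p = 43 then 12562261/12500000 else if p = 47 then 50254949/50000000 else if p = 53 then 100525851/100000000 else if p = 59 then 100540093/100000000 else if p = 61 then 100544521/100000000 else if p = 67 then 50278491/50000000 else if p = 71 then 50282343/50000000 else if p = 73 then 804547/800000 else if p = 79 then 10057887/10000000 else if p = 83 then 12573179/12500000 else if p = 89 then 100594707/100000000 else if p = 97 then 20121229/20000000 else if p = 101 then 20122303/20000000 else if p = 103 then 50307061/50000000 else if p = 107 then 50309593/50000000 else if p = 109 then 100621647/100000000 else if p = 113 then 50313219/50000000 else if p = 127 then 20128393/20000000 else if p = 131 then 12580761/12500000 else if p = 137 then 100652041/100000000 else if p = 139 then 6290873/6250000 else if p = 149 then 50331603/50000000 else if p = 151 then 100664979/100000000 else if p = 157 then 100670161/100000000 else if p = 163 then 25168787/25000000 else if p = 167 then 25169593/25000000 else 100683067/100000000)"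

definition Mv :: "nat \<Rightarrow> real" where
  "Mv p = (if p = 2 then 19816491/10000000 else if p = 3 then 18588903/12500000 else if p = 5 then 124006537/100000000 else if p = 7 then 115730021/100000000 else if p = 11 then 109223209/100000000 else if p = 13 then 107552711/100000000 else if p = 17 then 105486813/100000000 else if p = 19 then 26213631/25000000 else if p = 23 then 20783303/20000000 else if p = 29 then 51494571/50000000 else if p = 31 then 51379303/50000000 else if p = 37 then 51106989/50000000 else if p = 41 then 10193773/10000000 else if p = 43 then 25454609/25000000 else if p = 47 then 20321911/20000000 else if p = 53 then 101353823/100000000 else if p = 59 then 101148619/100000000 else if p = 61 then 20217779/20000000 else if p = 67 then 50465187/50000000 else if p = 71 then 100839027/100000000 else if p = 73 then 100796959/100000000 else if p = 79 then 100683/100000 else if p = 83 then 100615783/100000000 else if p = 89 then 50262881/50000000 else if p = 97 then 6276389/6250000 else if p = 101 then 100376283/100000000 else if p = 103 then 4014183/4000000 else if p = 107 then 100313453/100000000 else if p = 109 then 100293957/100000000 else if p = 113 then 100256909/100000000 else if p = 127 then 100144509/100000000 else if p = 131 then 50058259/50000000 else if p = 137 then 50038691/50000000 else if p = 139 then 12508129/12500000 else if p = 149 then 100007883/100000000 else if p = 151 then 1 else if p = 157 then 1 else if p = 163 then 1 else if p = 167 then 1 else 1)"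

definition Sset :: "nat \<Rightarrow> nat set" where
  "Sset p = (if p = 2 then {8,9,10} else if p = 3 then {5,6} else if p = 5 then {3} else if p = 7 then {2,3} else if p = 11 then {2} else if p = 13 then {2} else if p = 17 then {1,2} else if p = 19 then {1} else if p = 23 then {1} else if p = 29 then {1} else if p = 31 then {1} else if p = 37 then {1} else if p = 41 then {1} else if p = 43 then {1} else if p = 47 then {1} else if p = 53 then {1} else if p = 59 then {1} else if p = 61 then {1} else if p = 67 then {1} else if p = 71 then {1} else if p = 73 then {1} else if p = 79 then {1} else if p = 83 then {1} else if p = 89 then {1} else if p = 97 then {1} else if p = 101 then {1} else if p = 103 then {1} else if p = 107 then {1} else if p = 109 then {1} else if p = 113 then {1} else if p = 127 then {1} else if p = 131 then {1} else if p = 137 then {1} else if p = 139 then {1} else if p = 149 then {0,1} else if p = 151 then {0,1} else if p = 157 then {0,1} else if p = 163 then {0} else if p = 167 then {0} else {0})"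

definition hq :: "nat \<Rightarrow> nat \<Rightarrow> real" where "hq p a = fpp p a / w p ^ a"

lemma vals_2: "lo 2 = 693147/1000000" "w 2 = 50045803/50000000" "Mv 2 = 19816491/10000000" "Sset 2 = {8,9,10}"
  by (simp_all add: lo_def w_def Mv_def Sset_def)

lemma vals_3: "lo 3 = 10986041/10000000" "w 3 = 100145231/100000000" "Mv 3 = 18588903/12500000" "Sset 3 = {5,6}"
  by (simp_all add: lo_def w_def Mv_def Sset_def)

lemma vals_5: "lo 5 = 16094283/10000000" "w 5 = 3131651/3125000" "Mv 5 = 124006537/100000000" "Sset 5 = {3}"
  by (simp_all add: lo_def w_def Mv_def Sset_def)

lemma vals_7: "lo 7 = 3891811/2000000" "w 7 = 20051477/20000000" "Mv 7 = 115730021/100000000" "Sset 7 = {2,3}"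
  by (simp_all add: lo_def w_def Mv_def Sset_def)

lemma vals_11: "lo 11 = 2997351/1250000" "w 11 = 50158631/50000000" "Mv 11 = 109223209/100000000" "Sset 11 = {2}"
  by (simp_all add: lo_def w_def Mv_def Sset_def)

lemma vals_13: "lo 13 = 25649423/10000000" "w 13 = 100339403/100000000" "Mv 13 = 107552711/100000000" "Sset 13 = {2}"
  by (simp_all add: lo_def w_def Mv_def Sset_def)

lemma vals_17: "lo 17 = 1133281/400000" "w 17 = 100374967/100000000" "Mv 17 = 105486813/100000000" "Sset 17 = {1,2}"
  by (simp_all add: lo_def w_def Mv_def Sset_def)

lemma vals_19: "lo 19 = 29444309/10000000" "w 19 = 25097429/25000000" "Mv 19 = 26213631/25000000" "Sset 19 = {1}"
  by (simp_all add: lo_def w_def Mv_def Sset_def)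

lemma vals_23: "lo 23 = 15677439/5000000" "w 23 = 6275941/6250000" "Mv 23 = 20783303/20000000" "Sset 23 = {1}"
  by (simp_all add: lo_def w_def Mv_def Sset_def)

lemma vals_29: "lo 29 = 8418223/2500000" "w 29 = 100445809/100000000" "Mv 29 = 51494571/50000000" "Sset 29 = {1}"
  by (simp_all add: lo_def w_def Mv_def Sset_def)

lemma vals_31: "lo 31 = 34339811/10000000" "w 31 = 100454659/100000000" "Mv 31 = 51379303/50000000" "Sset 31 = {1}"
  by (simp_all add: lo_def w_def Mv_def Sset_def)

lemma vals_37: "lo 37 = 36109071/10000000" "w 37 = 100478139/100000000" "Mv 37 = 51106989/50000000" "Sset 37 = {1}"
  by (simp_all add: lo_def w_def Mv_def Sset_def)

lemma vals_41: "lo 41 = 742713/200000" "w 41 = 50245883/50000000" "Mv 41 = 10193773/10000000" "Sset 41 = {1}"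
  by (simp_all add: lo_def w_def Mv_def Sset_def)

lemma vals_43: "lo 43 = 37611893/10000000" "w 43 = 12562261/12500000" "Mv 43 = 25454609/25000000" "Sset 43 = {1}"
  by (simp_all add: lo_def w_def Mv_def Sset_def)

lemma vals_47: "lo 47 = 38501397/10000000" "w 47 = 50254949/50000000" "Mv 47 = 20321911/20000000" "Sset 47 = {1}"
  by (simp_all add: lo_def w_def Mv_def Sset_def)

lemma vals_53: "lo 53 = 9925709/2500000" "w 53 = 100525851/100000000" "Mv 53 = 101353823/100000000" "Sset 53 = {1}"
  by (simp_all add: lo_def w_def Mv_def Sset_def)

lemma vals_59: "lo 59 = 40775267/10000000" "w 59 = 100540093/100000000" "Mv 59 = 101148619/100000000" "Sset 59 = {1}"
  by (simp_all add: lo_def w_def Mv_def Sset_def)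

lemma vals_61: "lo 61 = 8221729/2000000" "w 61 = 100544521/100000000" "Mv 61 = 20217779/20000000" "Sset 61 = {1}"
  by (simp_all add: lo_def w_def Mv_def Sset_def)

lemma vals_67: "lo 67 = 4204683/1000000" "w 67 = 50278491/50000000" "Mv 67 = 50465187/50000000" "Sset 67 = {1}"
  by (simp_all add: lo_def w_def Mv_def Sset_def)

lemma vals_71: "lo 71 = 21313367/5000000" "w 71 = 50282343/50000000" "Mv 71 = 100839027/100000000" "Sset 71 = {1}"
  by (simp_all add: lo_def w_def Mv_def Sset_def)

lemma vals_73: "lo 73 = 21452237/5000000" "w 73 = 804547/800000" "Mv 73 = 100796959/100000000" "Sset 73 = {1}"
  by (simp_all add: lo_def w_def Mv_def Sset_def)

lemma vals_79: "lo 79 = 43694389/10000000" "w 79 = 10057887/10000000" "Mv 79 = 100683/100000" "Sset 79 = {1}"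
  by (simp_all add: lo_def w_def Mv_def Sset_def)

lemma vals_83: "lo 83 = 44188307/10000000" "w 83 = 12573179/12500000" "Mv 83 = 100615783/100000000" "Sset 83 = {1}"
  by (simp_all add: lo_def w_def Mv_def Sset_def)

lemma vals_89: "lo 89 = 1795451/400000" "w 89 = 100594707/100000000" "Mv 89 = 50262881/50000000" "Sset 89 = {1}"
  by (simp_all add: lo_def w_def Mv_def Sset_def)

lemma vals_97: "lo 97 = 5718377/1250000" "w 97 = 20121229/20000000" "Mv 97 = 6276389/6250000" "Sset 97 = {1}"
  by (simp_all add: lo_def w_def Mv_def Sset_def)

lemma vals_101: "lo 101 = 46151059/10000000" "w 101 = 20122303/20000000" "Mv 101 = 100376283/100000000" "Sset 101 = {1}"
  by (simp_all add: lo_def w_def Mv_def Sset_def)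

lemma vals_103: "lo 103 = 5793399/1250000" "w 103 = 50307061/50000000" "Mv 103 = 4014183/4000000" "Sset 103 = {1}"
  by (simp_all add: lo_def w_def Mv_def Sset_def)

lemma vals_107: "lo 107 = 5841023/1250000" "w 107 = 50309593/50000000" "Mv 107 = 100313453/100000000" "Sset 107 = {1}"
  by (simp_all add: lo_def w_def Mv_def Sset_def)

lemma vals_109: "lo 109 = 46913367/10000000" "w 109 = 100621647/100000000" "Mv 109 = 100293957/100000000" "Sset 109 = {1}"
  by (simp_all add: lo_def w_def Mv_def Sset_def)

lemma vals_113: "lo 113 = 47273769/10000000" "w 113 = 50313219/50000000" "Mv 113 = 100256909/100000000" "Sset 113 = {1}"
  by (simp_all add: lo_def w_def Mv_def Sset_def)

lemma vals_127: "lo 127 = 24220879/5000000" "w 127 = 20128393/20000000" "Mv 127 = 100144509/100000000" "Sset 127 = {1}"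
  by (simp_all add: lo_def w_def Mv_def Sset_def)

lemma vals_131: "lo 131 = 48751881/10000000" "w 131 = 12580761/12500000" "Mv 131 = 50058259/50000000" "Sset 131 = {1}"
  by (simp_all add: lo_def w_def Mv_def Sset_def)

lemma vals_137: "lo 137 = 49199691/10000000" "w 137 = 100652041/100000000" "Mv 137 = 50038691/50000000" "Sset 137 = {1}"
  by (simp_all add: lo_def w_def Mv_def Sset_def)

lemma vals_139: "lo 139 = 24672313/5000000" "w 139 = 6290873/6250000" "Mv 139 = 12508129/12500000" "Sset 139 = {1}"
  by (simp_all add: lo_def w_def Mv_def Sset_def)

lemma vals_149: "lo 149 = 50039357/10000000" "w 149 = 50331603/50000000" "Mv 149 = 100007883/100000000" "Sset 149 = {0,1}"
  by (simp_all add: lo_def w_def Mv_def Sset_def)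

lemma vals_151: "lo 151 = 50172677/10000000" "w 151 = 100664979/100000000" "Mv 151 = 1" "Sset 151 = {0,1}"
  by (simp_all add: lo_def w_def Mv_def Sset_def)

lemma vals_157: "lo 157 = 50562337/10000000" "w 157 = 100670161/100000000" "Mv 157 = 1" "Sset 157 = {0,1}"
  by (simp_all add: lo_def w_def Mv_def Sset_def)

lemma vals_163: "lo 163 = 50937381/10000000" "w 163 = 25168787/25000000" "Mv 163 = 1" "Sset 163 = {0}"
  by (simp_all add: lo_def w_def Mv_def Sset_def)

lemma vals_167: "lo 167 = 2558991/500000" "w 167 = 25169593/25000000" "Mv 167 = 1" "Sset 167 = {0}"
  by (simp_all add: lo_def w_def Mv_def Sset_def)

lemma cls_2: "hq 2 a \<le> Mv 2 \<and> (theta * Mv 2 < hq 2 a \<longrightarrow> a \<in> Sset 2)"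
proof (cases "a < 11")
  case True
  then have "a = 0 \<or> a = 1 \<or> a = 2 \<or> a = 3 \<or> a = 4 \<or> a = 5 \<or> a = 6 \<or> a = 7 \<or> a = 8 \<or> a = 9 \<or> a = 10" by presburger
  then show ?thesis by (elim disjE; simp add: hq_def vals_2 theta_def fpp_0 fpp_1 fpp_Suc fpp_numeral power_divide)
next
  case False
  have "hq 2 a \<le> (real 2 / (real 2 - 1)) / w 2 ^ 11"
    unfolding hq_def by (rule tail_bound) (use False in \<open>simp_all add: vals_2\<close>)
  also have "\<dots> \<le> theta * Mv 2" by (simp add: vals_2 theta_def power_divide)
  finally have "hq 2 a \<le> theta * Mv 2" .
  moreover have "theta * Mv 2 \<le> Mv 2" by (simp add: vals_2 theta_def)
  ultimately show ?thesis by linarith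
qed

lemma cls_3: "hq 3 a \<le> Mv 3 \<and> (theta * Mv 3 < hq 3 a \<longrightarrow> a \<in> Sset 3)"
proof (cases "a < 7")
  case True
  then have "a = 0 \<or> a = 1 \<or> a = 2 \<or> a = 3 \<or> a = 4 \<or> a = 5 \<or> a = 6" by presburger
  then show ?thesis by (elim disjE; simp add: hq_def vals_3 theta_def fpp_0 fpp_1 fpp_Suc fpp_numeral power_divide)
next
  case False
  have "hq 3 a \<le> (real 3 / (real 3 - 1)) / w 3 ^ 7"
    unfolding hq_def by (rule tail_bound) (use False in \<open>simp_all add: vals_3\<close>)
  also have "\<dots> \<le> theta * Mv 3" by (simp add: vals_3 theta_def power_divide)
  finally have "hq 3 a \<le> theta * Mv 3" .
  moreover have "theta * Mv 3 \<le> Mv 3" by (simp add: vals_3 theta_def)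
  ultimately show ?thesis by linarith
qed

lemma cls_5: "hq 5 a \<le> Mv 5 \<and> (theta * Mv 5 < hq 5 a \<longrightarrow> a \<in> Sset 5)"
proof (cases "a < 5")
  case True
  then have "a = 0 \<or> a = 1 \<or> a = 2 \<or> a = 3 \<or> a = 4" by presburger
  then show ?thesis by (elim disjE; simp add: hq_def vals_5 theta_def fpp_0 fpp_1 fpp_Suc fpp_numeral power_divide)
next
  case False
  have "hq 5 a \<le> (real 5 / (real 5 - 1)) / w 5 ^ 5"
    unfolding hq_def by (rule tail_bound) (use False in \<open>simp_all add: vals_5\<close>)
  also have "\<dots> \<le> theta * Mv 5" by (simp add: vals_5 theta_def power_divide)
  finally have "hq 5 a \<le> theta * Mv 5" .
  moreover have "theta * Mv 5 \<le> Mv 5" by (simp add: vals_5 theta_def)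
  ultimately show ?thesis by linarith
qed

lemma cls_7: "hq 7 a \<le> Mv 7 \<and> (theta * Mv 7 < hq 7 a \<longrightarrow> a \<in> Sset 7)"
proof (cases "a < 4")
  case True
  then have "a = 0 \<or> a = 1 \<or> a = 2 \<or> a = 3" by presburger
  then show ?thesis by (elim disjE; simp add: hq_def vals_7 theta_def fpp_0 fpp_1 fpp_Suc fpp_numeral power_divide)
next
  case False
  have "hq 7 a \<le> (real 7 / (real 7 - 1)) / w 7 ^ 4"
    unfolding hq_def by (rule tail_bound) (use False in \<open>simp_all add: vals_7\<close>)
  also have "\<dots> \<le> theta * Mv 7" by (simp add: vals_7 theta_def power_divide)
  finally have "hq 7 a \<le> theta * Mv 7" .
  moreover have "theta * Mv 7 \<le> Mv 7" by (simp add: vals_7 theta_def)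
  ultimately show ?thesis by linarith
qed

lemma cls_11: "hq 11 a \<le> Mv 11 \<and> (theta * Mv 11 < hq 11 a \<longrightarrow> a \<in> Sset 11)"
proof (cases "a < 3")
  case True
  then have "a = 0 \<or> a = 1 \<or> a = 2" by presburger
  then show ?thesis by (elim disjE; simp add: hq_def vals_11 theta_def fpp_0 fpp_1 fpp_Suc fpp_numeral power_divide)
next
  case False
  have "hq 11 a \<le> (real 11 / (real 11 - 1)) / w 11 ^ 3"
    unfolding hq_def by (rule tail_bound) (use False in \<open>simp_all add: vals_11\<close>)
  also have "\<dots> \<le> theta * Mv 11" by (simp add: vals_11 theta_def power_divide)
  finally have "hq 11 a \<le> theta * Mv 11" .
  moreover have "theta * Mv 11 \<le> Mv 11" by (simp add: vals_11 theta_def)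
  ultimately show ?thesis by linarith
qed

lemma cls_13: "hq 13 a \<le> Mv 13 \<and> (theta * Mv 13 < hq 13 a \<longrightarrow> a \<in> Sset 13)"
proof (cases "a < 3")
  case True
  then have "a = 0 \<or> a = 1 \<or> a = 2" by presburger
  then show ?thesis by (elim disjE; simp add: hq_def vals_13 theta_def fpp_0 fpp_1 fpp_Suc fpp_numeral power_divide)
next
  case False
  have "hq 13 a \<le> (real 13 / (real 13 - 1)) / w 13 ^ 3"
    unfolding hq_def by (rule tail_bound) (use False in \<open>simp_all add: vals_13\<close>)
  also have "\<dots> \<le> theta * Mv 13" by (simp add: vals_13 theta_def power_divide)
  finally have "hq 13 a \<le> theta * Mv 13" .
  moreover have "theta * Mv 13 \<le> Mv 13" by (simp add: vals_13 theta_def)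
  ultimately show ?thesis by linarith
qed

lemma cls_17: "hq 17 a \<le> Mv 17 \<and> (theta * Mv 17 < hq 17 a \<longrightarrow> a \<in> Sset 17)"
proof (cases "a < 3")
  case True
  then have "a = 0 \<or> a = 1 \<or> a = 2" by presburger
  then show ?thesis by (elim disjE; simp add: hq_def vals_17 theta_def fpp_0 fpp_1 fpp_Suc fpp_numeral power_divide)
next
  case False
  have "hq 17 a \<le> (real 17 / (real 17 - 1)) / w 17 ^ 3"
    unfolding hq_def by (rule tail_bound) (use False in \<open>simp_all add: vals_17\<close>)
  also have "\<dots> \<le> theta * Mv 17" by (simp add: vals_17 theta_def power_divide)
  finally have "hq 17 a \<le> theta * Mv 17" .
  moreover have "theta * Mv 17 \<le> Mv 17" by (simp add: vals_17 theta_def)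
  ultimately show ?thesis by linarith
qed

lemma cls_19: "hq 19 a \<le> Mv 19 \<and> (theta * Mv 19 < hq 19 a \<longrightarrow> a \<in> Sset 19)"
proof (cases "a < 2")
  case True
  then have "a = 0 \<or> a = 1" by presburger
  then show ?thesis by (elim disjE; simp add: hq_def vals_19 theta_def fpp_0 fpp_1 fpp_Suc fpp_numeral power_divide)
next
  case False
  have "hq 19 a \<le> (real 19 / (real 19 - 1)) / w 19 ^ 2"
    unfolding hq_def by (rule tail_bound) (use False in \<open>simp_all add: vals_19\<close>)
  also have "\<dots> \<le> theta * Mv 19" by (simp add: vals_19 theta_def power_divide)
  finally have "hq 19 a \<le> theta * Mv 19" .
  moreover have "theta * Mv 19 \<le> Mv 19" by (simp add: vals_19 theta_def)
  ultimately show ?thesis by linarith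
qed

lemma cls_23: "hq 23 a \<le> Mv 23 \<and> (theta * Mv 23 < hq 23 a \<longrightarrow> a \<in> Sset 23)"
proof (cases "a < 2")
  case True
  then have "a = 0 \<or> a = 1" by presburger
  then show ?thesis by (elim disjE; simp add: hq_def vals_23 theta_def fpp_0 fpp_1 fpp_Suc fpp_numeral power_divide)
next
  case False
  have "hq 23 a \<le> (real 23 / (real 23 - 1)) / w 23 ^ 2"
    unfolding hq_def by (rule tail_bound) (use False in \<open>simp_all add: vals_23\<close>)
  also have "\<dots> \<le> theta * Mv 23" by (simp add: vals_23 theta_def power_divide)
  finally have "hq 23 a \<le> theta * Mv 23" .
  moreover have "theta * Mv 23 \<le> Mv 23" by (simp add: vals_23 theta_def)
  ultimately show ?thesis by linarith
qed

lemma cls_29: "hq 29 a \<le> Mv 29 \<and> (theta * Mv 29 < hq 29 a \<longrightarrow> a \<in> Sset 29)"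
proof (cases "a < 2")
  case True
  then have "a = 0 \<or> a = 1" by presburger
  then show ?thesis by (elim disjE; simp add: hq_def vals_29 theta_def fpp_0 fpp_1 fpp_Suc fpp_numeral power_divide)
next
  case False
  have "hq 29 a \<le> (real 29 / (real 29 - 1)) / w 29 ^ 2"
    unfolding hq_def by (rule tail_bound) (use False in \<open>simp_all add: vals_29\<close>)
  also have "\<dots> \<le> theta * Mv 29" by (simp add: vals_29 theta_def power_divide)
  finally have "hq 29 a \<le> theta * Mv 29" .
  moreover have "theta * Mv 29 \<le> Mv 29" by (simp add: vals_29 theta_def)
  ultimately show ?thesis by linarith
qed

lemma cls_31: "hq 31 a \<le> Mv 31 \<and> (theta * Mv 31 < hq 31 a \<longrightarrow> a \<in> Sset 31)"
proof (cases "a < 2")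
  case True
  then have "a = 0 \<or> a = 1" by presburger
  then show ?thesis by (elim disjE; simp add: hq_def vals_31 theta_def fpp_0 fpp_1 fpp_Suc fpp_numeral power_divide)
next
  case False
  have "hq 31 a \<le> (real 31 / (real 31 - 1)) / w 31 ^ 2"
    unfolding hq_def by (rule tail_bound) (use False in \<open>simp_all add: vals_31\<close>)
  also have "\<dots> \<le> theta * Mv 31" by (simp add: vals_31 theta_def power_divide)
  finally have "hq 31 a \<le> theta * Mv 31" .
  moreover have "theta * Mv 31 \<le> Mv 31" by (simp add: vals_31 theta_def)
  ultimately show ?thesis by linarith
qed

lemma cls_37: "hq 37 a \<le> Mv 37 \<and> (theta * Mv 37 < hq 37 a \<longrightarrow> a \<in> Sset 37)"
proof (cases "a < 2")
  case True
  then have "a = 0 \<or> a = 1" by presburger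
  then show ?thesis by (elim disjE; simp add: hq_def vals_37 theta_def fpp_0 fpp_1 fpp_Suc fpp_numeral power_divide)
next
  case False
  have "hq 37 a \<le> (real 37 / (real 37 - 1)) / w 37 ^ 2"
    unfolding hq_def by (rule tail_bound) (use False in \<open>simp_all add: vals_37\<close>)
  also have "\<dots> \<le> theta * Mv 37" by (simp add: vals_37 theta_def power_divide)
  finally have "hq 37 a \<le> theta * Mv 37" .
  moreover have "theta * Mv 37 \<le> Mv 37" by (simp add: vals_37 theta_def)
  ultimately show ?thesis by linarith
qed

lemma cls_41: "hq 41 a \<le> Mv 41 \<and> (theta * Mv 41 < hq 41 a \<longrightarrow> a \<in> Sset 41)"
proof (cases "a < 2")
  case True
  then have "a = 0 \<or> a = 1" by presburger
  then show ?thesis by (elim disjE; simp add: hq_def vals_41 theta_def fpp_0 fpp_1 fpp_Suc fpp_numeral power_divide)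
next
  case False
  have "hq 41 a \<le> (real 41 / (real 41 - 1)) / w 41 ^ 2"
    unfolding hq_def by (rule tail_bound) (use False in \<open>simp_all add: vals_41\<close>)
  also have "\<dots> \<le> theta * Mv 41" by (simp add: vals_41 theta_def power_divide)
  finally have "hq 41 a \<le> theta * Mv 41" .
  moreover have "theta * Mv 41 \<le> Mv 41" by (simp add: vals_41 theta_def)
  ultimately show ?thesis by linarith
qed

lemma cls_43: "hq 43 a \<le> Mv 43 \<and> (theta * Mv 43 < hq 43 a \<longrightarrow> a \<in> Sset 43)"
proof (cases "a < 2")
  case True
  then have "a = 0 \<or> a = 1" by presburger
  then show ?thesis by (elim disjE; simp add: hq_def vals_43 theta_def fpp_0 fpp_1 fpp_Suc fpp_numeral power_divide)
next
  case False
  have "hq 43 a \<le> (real 43 / (real 43 - 1)) / w 43 ^ 2"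
    unfolding hq_def by (rule tail_bound) (use False in \<open>simp_all add: vals_43\<close>)
  also have "\<dots> \<le> theta * Mv 43" by (simp add: vals_43 theta_def power_divide)
  finally have "hq 43 a \<le> theta * Mv 43" .
  moreover have "theta * Mv 43 \<le> Mv 43" by (simp add: vals_43 theta_def)
  ultimately show ?thesis by linarith
qed

lemma cls_47: "hq 47 a \<le> Mv 47 \<and> (theta * Mv 47 < hq 47 a \<longrightarrow> a \<in> Sset 47)"
proof (cases "a < 2")
  case True
  then have "a = 0 \<or> a = 1" by presburger
  then show ?thesis by (elim disjE; simp add: hq_def vals_47 theta_def fpp_0 fpp_1 fpp_Suc fpp_numeral power_divide)
next
  case False
  have "hq 47 a \<le> (real 47 / (real 47 - 1)) / w 47 ^ 2"
    unfolding hq_def by (rule tail_bound) (use False in \<open>simp_all add: vals_47\<close>)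
  also have "\<dots> \<le> theta * Mv 47" by (simp add: vals_47 theta_def power_divide)
  finally have "hq 47 a \<le> theta * Mv 47" .
  moreover have "theta * Mv 47 \<le> Mv 47" by (simp add: vals_47 theta_def)
  ultimately show ?thesis by linarith
qed

lemma cls_53: "hq 53 a \<le> Mv 53 \<and> (theta * Mv 53 < hq 53 a \<longrightarrow> a \<in> Sset 53)"
proof (cases "a < 2")
  case True
  then have "a = 0 \<or> a = 1" by presburger
  then show ?thesis by (elim disjE; simp add: hq_def vals_53 theta_def fpp_0 fpp_1 fpp_Suc fpp_numeral power_divide)
next
  case False
  have "hq 53 a \<le> (real 53 / (real 53 - 1)) / w 53 ^ 2"
    unfolding hq_def by (rule tail_bound) (use False in \<open>simp_all add: vals_53\<close>)
  also have "\<dots> \<le> theta * Mv 53" by (simp add: vals_53 theta_def power_divide)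
  finally have "hq 53 a \<le> theta * Mv 53" .
  moreover have "theta * Mv 53 \<le> Mv 53" by (simp add: vals_53 theta_def)
  ultimately show ?thesis by linarith
qed

lemma cls_59: "hq 59 a \<le> Mv 59 \<and> (theta * Mv 59 < hq 59 a \<longrightarrow> a \<in> Sset 59)"
proof (cases "a < 2")
  case True
  then have "a = 0 \<or> a = 1" by presburger
  then show ?thesis by (elim disjE; simp add: hq_def vals_59 theta_def fpp_0 fpp_1 fpp_Suc fpp_numeral power_divide)
next
  case False
  have "hq 59 a \<le> (real 59 / (real 59 - 1)) / w 59 ^ 2"
    unfolding hq_def by (rule tail_bound) (use False in \<open>simp_all add: vals_59\<close>)
  also have "\<dots> \<le> theta * Mv 59" by (simp add: vals_59 theta_def power_divide)
  finally have "hq 59 a \<le> theta * Mv 59" .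
  moreover have "theta * Mv 59 \<le> Mv 59" by (simp add: vals_59 theta_def)
  ultimately show ?thesis by linarith
qed

lemma cls_61: "hq 61 a \<le> Mv 61 \<and> (theta * Mv 61 < hq 61 a \<longrightarrow> a \<in> Sset 61)"
proof (cases "a < 2")
  case True
  then have "a = 0 \<or> a = 1" by presburger
  then show ?thesis by (elim disjE; simp add: hq_def vals_61 theta_def fpp_0 fpp_1 fpp_Suc fpp_numeral power_divide)
next
  case False
  have "hq 61 a \<le> (real 61 / (real 61 - 1)) / w 61 ^ 2"
    unfolding hq_def by (rule tail_bound) (use False in \<open>simp_all add: vals_61\<close>)
  also have "\<dots> \<le> theta * Mv 61" by (simp add: vals_61 theta_def power_divide)
  finally have "hq 61 a \<le> theta * Mv 61" .
  moreover have "theta * Mv 61 \<le> Mv 61" by (simp add: vals_61 theta_def)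
  ultimately show ?thesis by linarith
qed

lemma cls_67: "hq 67 a \<le> Mv 67 \<and> (theta * Mv 67 < hq 67 a \<longrightarrow> a \<in> Sset 67)"
proof (cases "a < 2")
  case True
  then have "a = 0 \<or> a = 1" by presburger
  then show ?thesis by (elim disjE; simp add: hq_def vals_67 theta_def fpp_0 fpp_1 fpp_Suc fpp_numeral power_divide)
next
  case False
  have "hq 67 a \<le> (real 67 / (real 67 - 1)) / w 67 ^ 2"
    unfolding hq_def by (rule tail_bound) (use False in \<open>simp_all add: vals_67\<close>)
  also have "\<dots> \<le> theta * Mv 67" by (simp add: vals_67 theta_def power_divide)
  finally have "hq 67 a \<le> theta * Mv 67" .
  moreover have "theta * Mv 67 \<le> Mv 67" by (simp add: vals_67 theta_def)
  ultimately show ?thesis by linarith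
qed

lemma cls_71: "hq 71 a \<le> Mv 71 \<and> (theta * Mv 71 < hq 71 a \<longrightarrow> a \<in> Sset 71)"
proof (cases "a < 2")
  case True
  then have "a = 0 \<or> a = 1" by presburger
  then show ?thesis by (elim disjE; simp add: hq_def vals_71 theta_def fpp_0 fpp_1 fpp_Suc fpp_numeral power_divide)
next
  case False
  have "hq 71 a \<le> (real 71 / (real 71 - 1)) / w 71 ^ 2"
    unfolding hq_def by (rule tail_bound) (use False in \<open>simp_all add: vals_71\<close>)
  also have "\<dots> \<le> theta * Mv 71" by (simp add: vals_71 theta_def power_divide)
  finally have "hq 71 a \<le> theta * Mv 71" .
  moreover have "theta * Mv 71 \<le> Mv 71" by (simp add: vals_71 theta_def)
  ultimately show ?thesis by linarith
qed

lemma cls_73: "hq 73 a \<le> Mv 73 \<and> (theta * Mv 73 < hq 73 a \<longrightarrow> a \<in> Sset 73)"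
proof (cases "a < 2")
  case True
  then have "a = 0 \<or> a = 1" by presburger
  then show ?thesis by (elim disjE; simp add: hq_def vals_73 theta_def fpp_0 fpp_1 fpp_Suc fpp_numeral power_divide)
next
  case False
  have "hq 73 a \<le> (real 73 / (real 73 - 1)) / w 73 ^ 2"
    unfolding hq_def by (rule tail_bound) (use False in \<open>simp_all add: vals_73\<close>)
  also have "\<dots> \<le> theta * Mv 73" by (simp add: vals_73 theta_def power_divide)
  finally have "hq 73 a \<le> theta * Mv 73" .
  moreover have "theta * Mv 73 \<le> Mv 73" by (simp add: vals_73 theta_def)
  ultimately show ?thesis by linarith
qed

lemma cls_79: "hq 79 a \<le> Mv 79 \<and> (theta * Mv 79 < hq 79 a \<longrightarrow> a \<in> Sset 79)"
proof (cases "a < 2")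
  case True
  then have "a = 0 \<or> a = 1" by presburger
  then show ?thesis by (elim disjE; simp add: hq_def vals_79 theta_def fpp_0 fpp_1 fpp_Suc fpp_numeral power_divide)
next
  case False
  have "hq 79 a \<le> (real 79 / (real 79 - 1)) / w 79 ^ 2"
    unfolding hq_def by (rule tail_bound) (use False in \<open>simp_all add: vals_79\<close>)
  also have "\<dots> \<le> theta * Mv 79" by (simp add: vals_79 theta_def power_divide)
  finally have "hq 79 a \<le> theta * Mv 79" .
  moreover have "theta * Mv 79 \<le> Mv 79" by (simp add: vals_79 theta_def)
  ultimately show ?thesis by linarith
qed

lemma cls_83: "hq 83 a \<le> Mv 83 \<and> (theta * Mv 83 < hq 83 a \<longrightarrow> a \<in> Sset 83)"
proof (cases "a < 2")
  case True
  then have "a = 0 \<or> a = 1" by presburger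
  then show ?thesis by (elim disjE; simp add: hq_def vals_83 theta_def fpp_0 fpp_1 fpp_Suc fpp_numeral power_divide)
next
  case False
  have "hq 83 a \<le> (real 83 / (real 83 - 1)) / w 83 ^ 2"
    unfolding hq_def by (rule tail_bound) (use False in \<open>simp_all add: vals_83\<close>)
  also have "\<dots> \<le> theta * Mv 83" by (simp add: vals_83 theta_def power_divide)
  finally have "hq 83 a \<le> theta * Mv 83" .
  moreover have "theta * Mv 83 \<le> Mv 83" by (simp add: vals_83 theta_def)
  ultimately show ?thesis by linarith
qed

lemma cls_89: "hq 89 a \<le> Mv 89 \<and> (theta * Mv 89 < hq 89 a \<longrightarrow> a \<in> Sset 89)"
proof (cases "a < 2")
  case True
  then have "a = 0 \<or> a = 1" by presburger
  then show ?thesis by (elim disjE; simp add: hq_def vals_89 theta_def fpp_0 fpp_1 fpp_Suc fpp_numeral power_divide)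
next
  case False
  have "hq 89 a \<le> (real 89 / (real 89 - 1)) / w 89 ^ 2"
    unfolding hq_def by (rule tail_bound) (use False in \<open>simp_all add: vals_89\<close>)
  also have "\<dots> \<le> theta * Mv 89" by (simp add: vals_89 theta_def power_divide)
  finally have "hq 89 a \<le> theta * Mv 89" .
  moreover have "theta * Mv 89 \<le> Mv 89" by (simp add: vals_89 theta_def)
  ultimately show ?thesis by linarith
qed

lemma cls_97: "hq 97 a \<le> Mv 97 \<and> (theta * Mv 97 < hq 97 a \<longrightarrow> a \<in> Sset 97)"
proof (cases "a < 2")
  case True
  then have "a = 0 \<or> a = 1" by presburger
  then show ?thesis by (elim disjE; simp add: hq_def vals_97 theta_def fpp_0 fpp_1 fpp_Suc fpp_numeral power_divide)
next
  case False
  have "hq 97 a \<le> (real 97 / (real 97 - 1)) / w 97 ^ 2"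
    unfolding hq_def by (rule tail_bound) (use False in \<open>simp_all add: vals_97\<close>)
  also have "\<dots> \<le> theta * Mv 97" by (simp add: vals_97 theta_def power_divide)
  finally have "hq 97 a \<le> theta * Mv 97" .
  moreover have "theta * Mv 97 \<le> Mv 97" by (simp add: vals_97 theta_def)
  ultimately show ?thesis by linarith
qed

lemma cls_101: "hq 101 a \<le> Mv 101 \<and> (theta * Mv 101 < hq 101 a \<longrightarrow> a \<in> Sset 101)"
proof (cases "a < 2")
  case True
  then have "a = 0 \<or> a = 1" by presburger
  then show ?thesis by (elim disjE; simp add: hq_def vals_101 theta_def fpp_0 fpp_1 fpp_Suc fpp_numeral power_divide)
next
  case False
  have "hq 101 a \<le> (real 101 / (real 101 - 1)) / w 101 ^ 2"
    unfolding hq_def by (rule tail_bound) (use False in \<open>simp_all add: vals_101\<close>)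
  also have "\<dots> \<le> theta * Mv 101" by (simp add: vals_101 theta_def power_divide)
  finally have "hq 101 a \<le> theta * Mv 101" .
  moreover have "theta * Mv 101 \<le> Mv 101" by (simp add: vals_101 theta_def)
  ultimately show ?thesis by linarith
qed

lemma cls_103: "hq 103 a \<le> Mv 103 \<and> (theta * Mv 103 < hq 103 a \<longrightarrow> a \<in> Sset 103)"
proof (cases "a < 2")
  case True
  then have "a = 0 \<or> a = 1" by presburger
  then show ?thesis by (elim disjE; simp add: hq_def vals_103 theta_def fpp_0 fpp_1 fpp_Suc fpp_numeral power_divide)
next
  case False
  have "hq 103 a \<le> (real 103 / (real 103 - 1)) / w 103 ^ 2"
    unfolding hq_def by (rule tail_bound) (use False in \<open>simp_all add: vals_103\<close>)
  also have "\<dots> \<le> theta * Mv 103" by (simp add: vals_103 theta_def power_divide)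
  finally have "hq 103 a \<le> theta * Mv 103" .
  moreover have "theta * Mv 103 \<le> Mv 103" by (simp add: vals_103 theta_def)
  ultimately show ?thesis by linarith
qed

lemma cls_107: "hq 107 a \<le> Mv 107 \<and> (theta * Mv 107 < hq 107 a \<longrightarrow> a \<in> Sset 107)"
proof (cases "a < 2")
  case True
  then have "a = 0 \<or> a = 1" by presburger
  then show ?thesis by (elim disjE; simp add: hq_def vals_107 theta_def fpp_0 fpp_1 fpp_Suc fpp_numeral power_divide)
next
  case False
  have "hq 107 a \<le> (real 107 / (real 107 - 1)) / w 107 ^ 2"
    unfolding hq_def by (rule tail_bound) (use False in \<open>simp_all add: vals_107\<close>)
  also have "\<dots> \<le> theta * Mv 107" by (simp add: vals_107 theta_def power_divide)
  finally have "hq 107 a \<le> theta * Mv 107" .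
  moreover have "theta * Mv 107 \<le> Mv 107" by (simp add: vals_107 theta_def)
  ultimately show ?thesis by linarith
qed

lemma cls_109: "hq 109 a \<le> Mv 109 \<and> (theta * Mv 109 < hq 109 a \<longrightarrow> a \<in> Sset 109)"
proof (cases "a < 2")
  case True
  then have "a = 0 \<or> a = 1" by presburger
  then show ?thesis by (elim disjE; simp add: hq_def vals_109 theta_def fpp_0 fpp_1 fpp_Suc fpp_numeral power_divide)
next
  case False
  have "hq 109 a \<le> (real 109 / (real 109 - 1)) / w 109 ^ 2"
    unfolding hq_def by (rule tail_bound) (use False in \<open>simp_all add: vals_109\<close>)
  also have "\<dots> \<le> theta * Mv 109" by (simp add: vals_109 theta_def power_divide)
  finally have "hq 109 a \<le> theta * Mv 109" .
  moreover have "theta * Mv 109 \<le> Mv 109" by (simp add: vals_109 theta_def)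
  ultimately show ?thesis by linarith
qed

lemma cls_113: "hq 113 a \<le> Mv 113 \<and> (theta * Mv 113 < hq 113 a \<longrightarrow> a \<in> Sset 113)"
proof (cases "a < 2")
  case True
  then have "a = 0 \<or> a = 1" by presburger
  then show ?thesis by (elim disjE; simp add: hq_def vals_113 theta_def fpp_0 fpp_1 fpp_Suc fpp_numeral power_divide)
next
  case False
  have "hq 113 a \<le> (real 113 / (real 113 - 1)) / w 113 ^ 2"
    unfolding hq_def by (rule tail_bound) (use False in \<open>simp_all add: vals_113\<close>)
  also have "\<dots> \<le> theta * Mv 113" by (simp add: vals_113 theta_def power_divide)
  finally have "hq 113 a \<le> theta * Mv 113" .
  moreover have "theta * Mv 113 \<le> Mv 113" by (simp add: vals_113 theta_def)
  ultimately show ?thesis by linarith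
qed

lemma cls_127: "hq 127 a \<le> Mv 127 \<and> (theta * Mv 127 < hq 127 a \<longrightarrow> a \<in> Sset 127)"
proof (cases "a < 2")
  case True
  then have "a = 0 \<or> a = 1" by presburger
  then show ?thesis by (elim disjE; simp add: hq_def vals_127 theta_def fpp_0 fpp_1 fpp_Suc fpp_numeral power_divide)
next
  case False
  have "hq 127 a \<le> (real 127 / (real 127 - 1)) / w 127 ^ 2"
    unfolding hq_def by (rule tail_bound) (use False in \<open>simp_all add: vals_127\<close>)
  also have "\<dots> \<le> theta * Mv 127" by (simp add: vals_127 theta_def power_divide)
  finally have "hq 127 a \<le> theta * Mv 127" .
  moreover have "theta * Mv 127 \<le> Mv 127" by (simp add: vals_127 theta_def)
  ultimately show ?thesis by linarith
qed

lemma cls_131: "hq 131 a \<le> Mv 131 \<and> (theta * Mv 131 < hq 131 a \<longrightarrow> a \<in> Sset 131)"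
proof (cases "a < 2")
  case True
  then have "a = 0 \<or> a = 1" by presburger
  then show ?thesis by (elim disjE; simp add: hq_def vals_131 theta_def fpp_0 fpp_1 fpp_Suc fpp_numeral power_divide)
next
  case False
  have "hq 131 a \<le> (real 131 / (real 131 - 1)) / w 131 ^ 2"
    unfolding hq_def by (rule tail_bound) (use False in \<open>simp_all add: vals_131\<close>)
  also have "\<dots> \<le> theta * Mv 131" by (simp add: vals_131 theta_def power_divide)
  finally have "hq 131 a \<le> theta * Mv 131" .
  moreover have "theta * Mv 131 \<le> Mv 131" by (simp add: vals_131 theta_def)
  ultimately show ?thesis by linarith
qed

lemma cls_137: "hq 137 a \<le> Mv 137 \<and> (theta * Mv 137 < hq 137 a \<longrightarrow> a \<in> Sset 137)"
proof (cases "a < 2")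
  case True
  then have "a = 0 \<or> a = 1" by presburger
  then show ?thesis by (elim disjE; simp add: hq_def vals_137 theta_def fpp_0 fpp_1 fpp_Suc fpp_numeral power_divide)
next
  case False
  have "hq 137 a \<le> (real 137 / (real 137 - 1)) / w 137 ^ 2"
    unfolding hq_def by (rule tail_bound) (use False in \<open>simp_all add: vals_137\<close>)
  also have "\<dots> \<le> theta * Mv 137" by (simp add: vals_137 theta_def power_divide)
  finally have "hq 137 a \<le> theta * Mv 137" .
  moreover have "theta * Mv 137 \<le> Mv 137" by (simp add: vals_137 theta_def)
  ultimately show ?thesis by linarith
qed

lemma cls_139: "hq 139 a \<le> Mv 139 \<and> (theta * Mv 139 < hq 139 a \<longrightarrow> a \<in> Sset 139)"
proof (cases "a < 2")
  case True
  then have "a = 0 \<or> a = 1" by presburger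
  then show ?thesis by (elim disjE; simp add: hq_def vals_139 theta_def fpp_0 fpp_1 fpp_Suc fpp_numeral power_divide)
next
  case False
  have "hq 139 a \<le> (real 139 / (real 139 - 1)) / w 139 ^ 2"
    unfolding hq_def by (rule tail_bound) (use False in \<open>simp_all add: vals_139\<close>)
  also have "\<dots> \<le> theta * Mv 139" by (simp add: vals_139 theta_def power_divide)
  finally have "hq 139 a \<le> theta * Mv 139" .
  moreover have "theta * Mv 139 \<le> Mv 139" by (simp add: vals_139 theta_def)
  ultimately show ?thesis by linarith
qed

lemma cls_149: "hq 149 a \<le> Mv 149 \<and> (theta * Mv 149 < hq 149 a \<longrightarrow> a \<in> Sset 149)"
proof (cases "a < 2")
  case True
  then have "a = 0 \<or> a = 1" by presburger
  then show ?thesis by (elim disjE; simp add: hq_def vals_149 theta_def fpp_0 fpp_1 fpp_Suc fpp_numeral power_divide)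
next
  case False
  have "hq 149 a \<le> (real 149 / (real 149 - 1)) / w 149 ^ 2"
    unfolding hq_def by (rule tail_bound) (use False in \<open>simp_all add: vals_149\<close>)
  also have "\<dots> \<le> theta * Mv 149" by (simp add: vals_149 theta_def power_divide)
  finally have "hq 149 a \<le> theta * Mv 149" .
  moreover have "theta * Mv 149 \<le> Mv 149" by (simp add: vals_149 theta_def)
  ultimately show ?thesis by linarith
qed

lemma cls_151: "hq 151 a \<le> Mv 151 \<and> (theta * Mv 151 < hq 151 a \<longrightarrow> a \<in> Sset 151)"
proof (cases "a < 2")
  case True
  then have "a = 0 \<or> a = 1" by presburger
  then show ?thesis by (elim disjE; simp add: hq_def vals_151 theta_def fpp_0 fpp_1 fpp_Suc fpp_numeral power_divide)
next
  case False
  have "hq 151 a \<le> (real 151 / (real 151 - 1)) / w 151 ^ 2"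
    unfolding hq_def by (rule tail_bound) (use False in \<open>simp_all add: vals_151\<close>)
  also have "\<dots> \<le> theta * Mv 151" by (simp add: vals_151 theta_def power_divide)
  finally have "hq 151 a \<le> theta * Mv 151" .
  moreover have "theta * Mv 151 \<le> Mv 151" by (simp add: vals_151 theta_def)
  ultimately show ?thesis by linarith
qed

lemma cls_157: "hq 157 a \<le> Mv 157 \<and> (theta * Mv 157 < hq 157 a \<longrightarrow> a \<in> Sset 157)"
proof (cases "a < 2")
  case True
  then have "a = 0 \<or> a = 1" by presburger
  then show ?thesis by (elim disjE; simp add: hq_def vals_157 theta_def fpp_0 fpp_1 fpp_Suc fpp_numeral power_divide)
next
  case False
  have "hq 157 a \<le> (real 157 / (real 157 - 1)) / w 157 ^ 2"
    unfolding hq_def by (rule tail_bound) (use False in \<open>simp_all add: vals_157\<close>)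
  also have "\<dots> \<le> theta * Mv 157" by (simp add: vals_157 theta_def power_divide)
  finally have "hq 157 a \<le> theta * Mv 157" .
  moreover have "theta * Mv 157 \<le> Mv 157" by (simp add: vals_157 theta_def)
  ultimately show ?thesis by linarith
qed

lemma cls_163: "hq 163 a \<le> Mv 163 \<and> (theta * Mv 163 < hq 163 a \<longrightarrow> a \<in> Sset 163)"
proof (cases "a < 2")
  case True
  then have "a = 0 \<or> a = 1" by presburger
  then show ?thesis by (elim disjE; simp add: hq_def vals_163 theta_def fpp_0 fpp_1 fpp_Suc fpp_numeral power_divide)
next
  case False
  have "hq 163 a \<le> (real 163 / (real 163 - 1)) / w 163 ^ 2"
    unfolding hq_def by (rule tail_bound) (use False in \<open>simp_all add: vals_163\<close>)
  also have "\<dots> \<le> theta * Mv 163" by (simp add: vals_163 theta_def power_divide)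
  finally have "hq 163 a \<le> theta * Mv 163" .
  moreover have "theta * Mv 163 \<le> Mv 163" by (simp add: vals_163 theta_def)
  ultimately show ?thesis by linarith
qed

lemma cls_167: "hq 167 a \<le> Mv 167 \<and> (theta * Mv 167 < hq 167 a \<longrightarrow> a \<in> Sset 167)"
proof (cases "a < 1")
  case True
  then have "a = 0" by presburger
  then show ?thesis by (simp add: hq_def vals_167 theta_def fpp_0 fpp_1 fpp_Suc fpp_numeral power_divide)
next
  case False
  have "hq 167 a \<le> (real 167 / (real 167 - 1)) / w 167 ^ 1"
    unfolding hq_def by (rule tail_bound) (use False in \<open>simp_all add: vals_167\<close>)
  also have "\<dots> \<le> theta * Mv 167" by (simp add: vals_167 theta_def power_divide)
  finally have "hq 167 a \<le> theta * Mv 167" .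
  moreover have "theta * Mv 167 \<le> Mv 167" by (simp add: vals_167 theta_def)
  ultimately show ?thesis by linarith
qed

lemma prime_small_iff:
  assumes "p < 173" shows "prime p \<longleftrightarrow> p \<in> set Qlist"
proof
  assume "p \<in> set Qlist" then show "prime p" using Qlist_primes by blast
next
  assume pp: "prime p"
  have "p \<in> {..<173}" using assms by simp
  then have "p \<in> set Qlist \<or> p < 2 \<or> (\<exists>d\<in>{2,3,5,7,11,13}. d dvd p \<and> d < p)"
    using small_nonprimes by blast
  moreover have "\<not> p < 2" using pp prime_ge_2_nat[of p] by linarith
  moreover have "\<not> (\<exists>d\<in>{2,3,5,7,11,13}. d dvd p \<and> d < p)"
  proof
    assume "\<exists>d\<in>{2,3,5,7,11,13}. d dvd p \<and> d < p"
    then obtain d where d: "d \<in> {2,3,5,7,11,13}" "d dvd p" "d < p" by blast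
    have "d \<ge> 2" using d(1) by auto
    then show False using pp d(2,3) by (auto simp: prime_nat_iff)
  qed
  ultimately show "p \<in> set Qlist" by blast
qed

lemma Qlist_lt: "p \<in> set Qlist \<Longrightarrow> p < 173"
  unfolding Qlist_def by auto

lemma prime_filter:
  assumes "\<And>p. P p \<Longrightarrow> p < 173"
  shows "{p. prime p \<and> P p} = set (filter P Qlist)"
  using assms prime_small_iff Qlist_lt by auto

lemma dist_Qlist: "distinct Qlist" by (simp add: Qlist_def)
lemma card_Qlist: "card (set Qlist) = 39" by (simp add: Qlist_def)

lemma first_primes_39: "first_primes 39 = set Qlist"
proof (rule set_eqI)
  fix p
  show "p \<in> first_primes 39 \<longleftrightarrow> p \<in> set Qlist"
  proof
    assume "p \<in> first_primes 39"
    then have pp: "prime p" and c: "card {q. prime q \<and> q < p} < 39" by (auto simp: first_primes_def)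
    show "p \<in> set Qlist"
    proof (rule ccontr)
      assume "p \<notin> set Qlist"
      then have "\<not> p < 173" using prime_small_iff pp by blast
      have "x < p" if "x \<in> set Qlist" for x using Qlist_lt[OF that] \<open>\<not> p < 173\<close> by linarith
      then have "set Qlist \<subseteq> {q. prime q \<and> q < p}" using Qlist_primes by auto
      moreover have "finite {q. prime q \<and> q < p}" by (rule finite_subset[of _ "{..<p}"]) auto
      ultimately have "card (set Qlist) \<le> card {q. prime q \<and> q < p}" by (rule card_mono[rotated])
      then show False using c card_Qlist by simp
    qed
  next
    assume pq: "p \<in> set Qlist"
    then have pp: "prime p" using Qlist_primes by blast
    have "{q. prime q \<and> q < p} \<subseteq> set Qlist - {p}"
    proof
      fix q assume "q \<in> {q. prime q \<and> q < p}"
      then have q: "prime q" "q < p" by auto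
      have "q < 173" using q(2) Qlist_lt[OF pq] by linarith
      then have "q \<in> set Qlist" using prime_small_iff q(1) by blast
      then show "q \<in> set Qlist - {p}" using q(2) by auto
    qed
    then have "card {q. prime q \<and> q < p} \<le> card (set Qlist - {p})" by (intro card_mono) auto
    also have "\<dots> = 38" using pq card_Qlist by simp
    finally show "p \<in> first_primes 39" using pp by (simp add: first_primes_def)
  qed
qed

lemma w_quad:
  fixes W y :: real
  assumes "1 \<le> W" "W \<le> 1 + y + y^2 / 2" "0 \<le> y"
  shows "1 \<le> W \<and> W \<le> exp y"
  using assms exp_lower_Taylor_quadratic[of y] by simp

lemma not_in_Qlist_defaults:
  assumes "p \<notin> set Qlist"
  shows "lo p = 51532771/10000000" "w p = 100683067/100000000" "Mv p = 1" "Sset p = {0}"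
  using assms by (simp_all add: Qlist_def lo_def w_def Mv_def Sset_def)

definition hi :: "nat \<Rightarrow> real" where
  "hi p = (if p = 2 then 173287/250000 else if p = 3 then 10986213/10000000 else if p = 5 then 4023609/2500000 else if p = 7 then 9729577/5000000 else if p = 11 then 1498691/625000 else if p = 13 then 25649593/10000000 else if p = 17 then 442691/156250 else if p = 19 then 29444467/10000000 else if p = 23 then 31355007/10000000 else if p = 29 then 33673047/10000000 else if p = 31 then 34339947/10000000 else if p = 37 then 36109279/10000000 else if p = 41 then 7427163/2000000 else if p = 43 then 37612133/10000000 else if p = 47 then 1540063/400000 else if p = 53 then 39703017/10000000 else if p = 59 then 40775477/10000000 else if p = 61 then 1027721/250000 else if p = 67 then 42047019/10000000 else if p = 71 then 426269/100000 else if p = 73 then 10726181/2500000 else if p = 79 then 43694567/10000000 else if p = 83 then 44188529/10000000 else if p = 89 then 1122163/250000 else if p = 97 then 1429601/312500 else if p = 101 then 11537833/2500000 else if p = 103 then 11586851/2500000 else if p = 107 then 46728417/10000000 else if p = 109 then 11728401/2500000 else if p = 113 then 47274009/10000000 else if p = 127 then 6055249/1250000 else if p = 131 then 9750417/2000000 else if p = 137 then 9839989/2000000 else if p = 139 then 49344871/10000000 else if p = 149 then 50039583/10000000 else if p = 151 then 50172931/10000000 else if p = 157 then 50562589/10000000 else if p = 163 then 50937651/10000000 else if p = 167 then 6397511/1250000 else 0)"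

lemma hi_2: "hi 2 = 173287/250000" by (simp add: hi_def)

lemma lohi_2: "lo 2 \<le> ln (real 2) \<and> ln (real 2) \<le> hi 2"
  using lnb_2 by (simp add: vals_2 hi_2)

lemma hi_3: "hi 3 = 10986213/10000000" by (simp add: hi_def)

lemma lohi_3: "lo 3 \<le> ln (real 3) \<and> ln (real 3) \<le> hi 3"
  unfolding vals_3(1) hi_3 of_nat_numeral by (rule lnb_3)

lemma hi_5: "hi 5 = 4023609/2500000" by (simp add: hi_def)

lemma lohi_5: "lo 5 \<le> ln (real 5) \<and> ln (real 5) \<le> hi 5"
  unfolding vals_5(1) hi_5 of_nat_numeral by (rule lnb_5)

lemma hi_7: "hi 7 = 9729577/5000000" by (simp add: hi_def)

lemma lohi_7: "lo 7 \<le> ln (real 7) \<and> ln (real 7) \<le> hi 7"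
  unfolding vals_7(1) hi_7 of_nat_numeral by (rule lnb_7)

lemma hi_11: "hi 11 = 1498691/625000" by (simp add: hi_def)

lemma lohi_11: "lo 11 \<le> ln (real 11) \<and> ln (real 11) \<le> hi 11"
  unfolding vals_11(1) hi_11 of_nat_numeral by (rule lnb_11)

lemma hi_13: "hi 13 = 25649593/10000000" by (simp add: hi_def)

lemma lohi_13: "lo 13 \<le> ln (real 13) \<and> ln (real 13) \<le> hi 13"
  unfolding vals_13(1) hi_13 of_nat_numeral by (rule lnb_13)

lemma hi_17: "hi 17 = 442691/156250" by (simp add: hi_def)

lemma lohi_17: "lo 17 \<le> ln (real 17) \<and> ln (real 17) \<le> hi 17"
  unfolding vals_17(1) hi_17 of_nat_numeral by (rule lnb_17)

lemma hi_19: "hi 19 = 29444467/10000000" by (simp add: hi_def)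

lemma lohi_19: "lo 19 \<le> ln (real 19) \<and> ln (real 19) \<le> hi 19"
  unfolding vals_19(1) hi_19 of_nat_numeral by (rule lnb_19)

lemma hi_23: "hi 23 = 31355007/10000000" by (simp add: hi_def)

lemma lohi_23: "lo 23 \<le> ln (real 23) \<and> ln (real 23) \<le> hi 23"
  unfolding vals_23(1) hi_23 of_nat_numeral by (rule lnb_23)

lemma hi_29: "hi 29 = 33673047/10000000" by (simp add: hi_def)

lemma lohi_29: "lo 29 \<le> ln (real 29) \<and> ln (real 29) \<le> hi 29"
  unfolding vals_29(1) hi_29 of_nat_numeral by (rule lnb_29)

lemma hi_31: "hi 31 = 34339947/10000000" by (simp add: hi_def)

lemma lohi_31: "lo 31 \<le> ln (real 31) \<and> ln (real 31) \<le> hi 31"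
  unfolding vals_31(1) hi_31 of_nat_numeral by (rule lnb_31)

lemma hi_37: "hi 37 = 36109279/10000000" by (simp add: hi_def)

lemma lohi_37: "lo 37 \<le> ln (real 37) \<and> ln (real 37) \<le> hi 37"
  unfolding vals_37(1) hi_37 of_nat_numeral by (rule lnb_37)

lemma hi_41: "hi 41 = 7427163/2000000" by (simp add: hi_def)

lemma lohi_41: "lo 41 \<le> ln (real 41) \<and> ln (real 41) \<le> hi 41"
  unfolding vals_41(1) hi_41 of_nat_numeral by (rule lnb_41)

lemma hi_43: "hi 43 = 37612133/10000000" by (simp add: hi_def)

lemma lohi_43: "lo 43 \<le> ln (real 43) \<and> ln (real 43) \<le> hi 43"
  unfolding vals_43(1) hi_43 of_nat_numeral by (rule lnb_43)

lemma hi_47: "hi 47 = 1540063/400000" by (simp add: hi_def)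

lemma lohi_47: "lo 47 \<le> ln (real 47) \<and> ln (real 47) \<le> hi 47"
  unfolding vals_47(1) hi_47 of_nat_numeral by (rule lnb_47)

lemma hi_53: "hi 53 = 39703017/10000000" by (simp add: hi_def)

lemma lohi_53: "lo 53 \<le> ln (real 53) \<and> ln (real 53) \<le> hi 53"
  unfolding vals_53(1) hi_53 of_nat_numeral by (rule lnb_53)

lemma hi_59: "hi 59 = 40775477/10000000" by (simp add: hi_def)

lemma lohi_59: "lo 59 \<le> ln (real 59) \<and> ln (real 59) \<le> hi 59"
  unfolding vals_59(1) hi_59 of_nat_numeral by (rule lnb_59)

lemma hi_61: "hi 61 = 1027721/250000" by (simp add: hi_def)

lemma lohi_61: "lo 61 \<le> ln (real 61) \<and> ln (real 61) \<le> hi 61"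
  unfolding vals_61(1) hi_61 of_nat_numeral by (rule lnb_61)

lemma hi_67: "hi 67 = 42047019/10000000" by (simp add: hi_def)

lemma lohi_67: "lo 67 \<le> ln (real 67) \<and> ln (real 67) \<le> hi 67"
  unfolding vals_67(1) hi_67 of_nat_numeral by (rule lnb_67)

lemma hi_71: "hi 71 = 426269/100000" by (simp add: hi_def)

lemma lohi_71: "lo 71 \<le> ln (real 71) \<and> ln (real 71) \<le> hi 71"
  unfolding vals_71(1) hi_71 of_nat_numeral by (rule lnb_71)

lemma hi_73: "hi 73 = 10726181/2500000" by (simp add: hi_def)

lemma lohi_73: "lo 73 \<le> ln (real 73) \<and> ln (real 73) \<le> hi 73"
  unfolding vals_73(1) hi_73 of_nat_numeral by (rule lnb_73)

lemma hi_79: "hi 79 = 43694567/10000000" by (simp add: hi_def)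

lemma lohi_79: "lo 79 \<le> ln (real 79) \<and> ln (real 79) \<le> hi 79"
  unfolding vals_79(1) hi_79 of_nat_numeral by (rule lnb_79)

lemma hi_83: "hi 83 = 44188529/10000000" by (simp add: hi_def)

lemma lohi_83: "lo 83 \<le> ln (real 83) \<and> ln (real 83) \<le> hi 83"
  unfolding vals_83(1) hi_83 of_nat_numeral by (rule lnb_83)

lemma hi_89: "hi 89 = 1122163/250000" by (simp add: hi_def)

lemma lohi_89: "lo 89 \<le> ln (real 89) \<and> ln (real 89) \<le> hi 89"
  unfolding vals_89(1) hi_89 of_nat_numeral by (rule lnb_89)

lemma hi_97: "hi 97 = 1429601/312500" by (simp add: hi_def)

lemma lohi_97: "lo 97 \<le> ln (real 97) \<and> ln (real 97) \<le> hi 97"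
  unfolding vals_97(1) hi_97 of_nat_numeral by (rule lnb_97)

lemma hi_101: "hi 101 = 11537833/2500000" by (simp add: hi_def)

lemma lohi_101: "lo 101 \<le> ln (real 101) \<and> ln (real 101) \<le> hi 101"
  unfolding vals_101(1) hi_101 of_nat_numeral by (rule lnb_101)

lemma hi_103: "hi 103 = 11586851/2500000" by (simp add: hi_def)

lemma lohi_103: "lo 103 \<le> ln (real 103) \<and> ln (real 103) \<le> hi 103"
  unfolding vals_103(1) hi_103 of_nat_numeral by (rule lnb_103)

lemma hi_107: "hi 107 = 46728417/10000000" by (simp add: hi_def)

lemma lohi_107: "lo 107 \<le> ln (real 107) \<and> ln (real 107) \<le> hi 107"
  unfolding vals_107(1) hi_107 of_nat_numeral by (rule lnb_107)

lemma hi_109: "hi 109 = 11728401/2500000" by (simp add: hi_def)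

lemma lohi_109: "lo 109 \<le> ln (real 109) \<and> ln (real 109) \<le> hi 109"
  unfolding vals_109(1) hi_109 of_nat_numeral by (rule lnb_109)

lemma hi_113: "hi 113 = 47274009/10000000" by (simp add: hi_def)

lemma lohi_113: "lo 113 \<le> ln (real 113) \<and> ln (real 113) \<le> hi 113"
  unfolding vals_113(1) hi_113 of_nat_numeral by (rule lnb_113)

lemma hi_127: "hi 127 = 6055249/1250000" by (simp add: hi_def)

lemma lohi_127: "lo 127 \<le> ln (real 127) \<and> ln (real 127) \<le> hi 127"
  unfolding vals_127(1) hi_127 of_nat_numeral by (rule lnb_127)

lemma hi_131: "hi 131 = 9750417/2000000" by (simp add: hi_def)

lemma lohi_131: "lo 131 \<le> ln (real 131) \<and> ln (real 131) \<le> hi 131"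
  unfolding vals_131(1) hi_131 of_nat_numeral by (rule lnb_131)

lemma hi_137: "hi 137 = 9839989/2000000" by (simp add: hi_def)

lemma lohi_137: "lo 137 \<le> ln (real 137) \<and> ln (real 137) \<le> hi 137"
  unfolding vals_137(1) hi_137 of_nat_numeral by (rule lnb_137)

lemma hi_139: "hi 139 = 49344871/10000000" by (simp add: hi_def)

lemma lohi_139: "lo 139 \<le> ln (real 139) \<and> ln (real 139) \<le> hi 139"
  unfolding vals_139(1) hi_139 of_nat_numeral by (rule lnb_139)

lemma hi_149: "hi 149 = 50039583/10000000" by (simp add: hi_def)

lemma lohi_149: "lo 149 \<le> ln (real 149) \<and> ln (real 149) \<le> hi 149"
  unfolding vals_149(1) hi_149 of_nat_numeral by (rule lnb_149)

lemma hi_151: "hi 151 = 50172931/10000000" by (simp add: hi_def)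

lemma lohi_151: "lo 151 \<le> ln (real 151) \<and> ln (real 151) \<le> hi 151"
  unfolding vals_151(1) hi_151 of_nat_numeral by (rule lnb_151)

lemma hi_157: "hi 157 = 50562589/10000000" by (simp add: hi_def)

lemma lohi_157: "lo 157 \<le> ln (real 157) \<and> ln (real 157) \<le> hi 157"
  unfolding vals_157(1) hi_157 of_nat_numeral by (rule lnb_157)

lemma hi_163: "hi 163 = 50937651/10000000" by (simp add: hi_def)

lemma lohi_163: "lo 163 \<le> ln (real 163) \<and> ln (real 163) \<le> hi 163"
  unfolding vals_163(1) hi_163 of_nat_numeral by (rule lnb_163)

lemma hi_167: "hi 167 = 6397511/1250000" by (simp add: hi_def)

lemma lohi_167: "lo 167 \<le> ln (real 167) \<and> ln (real 167) \<le> hi 167"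
  unfolding vals_167(1) hi_167 of_nat_numeral by (rule lnb_167)

lemma Qlist_disj: "p \<in> set Qlist \<Longrightarrow> p = 2 \<or> p = 3 \<or> p = 5 \<or> p = 7 \<or> p = 11 \<or> p = 13 \<or> p = 17 \<or> p = 19 \<or> p = 23 \<or> p = 29 \<or> p = 31 \<or> p = 37 \<or> p = 41 \<or> p = 43 \<or> p = 47 \<or> p = 53 \<or> p = 59 \<or> p = 61 \<or> p = 67 \<or> p = 71 \<or> p = 73 \<or> p = 79 \<or> p = 83 \<or> p = 89 \<or> p = 97 \<or> p = 101 \<or> p = 103 \<or> p = 107 \<or> p = 109 \<or> p = 113 \<or> p = 127 \<or> p = 131 \<or> p = 137 \<or> p = 139 \<or> p = 149 \<or> p = 151 \<or> p = 157 \<or> p = 163 \<or> p = 167"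
  by (simp add: Qlist_def)

lemma lo_le_ln_small: "p \<in> set Qlist \<Longrightarrow> lo p \<le> ln (real p) \<and> ln (real p) \<le> hi p"
  by (drule Qlist_disj, elim disjE; hypsubst; rule lohi_2 lohi_3 lohi_5 lohi_7 lohi_11 lohi_13 lohi_17 lohi_19 lohi_23 lohi_29 lohi_31 lohi_37 lohi_41 lohi_43 lohi_47 lohi_53 lohi_59 lohi_61 lohi_67 lohi_71 lohi_73 lohi_79 lohi_83 lohi_89 lohi_97 lohi_101 lohi_103 lohi_107 lohi_109 lohi_113 lohi_127 lohi_131 lohi_137 lohi_139 lohi_149 lohi_151 lohi_157 lohi_163 lohi_167)

lemma w_ok_small: "p \<in> set Qlist \<Longrightarrow> 1 \<le> w p \<and> w p \<le> exp (lo p / 757)"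
  unfolding Qlist_def by (simp; elim disjE; (rule w_quad; simp add: vals_2 vals_3 vals_5 vals_7 vals_11 vals_13 vals_17 vals_19 vals_23 vals_29 vals_31 vals_37 vals_41 vals_43 vals_47 vals_53 vals_59 vals_61 vals_67 vals_71 vals_73 vals_79 vals_83 vals_89 vals_97 vals_101 vals_103 vals_107 vals_109 vals_113 vals_127 vals_131 vals_137 vals_139 vals_149 vals_151 vals_157 vals_163 vals_167 power_divide))

lemma hq_cls_small: "p \<in> set Qlist \<Longrightarrow> hq p a \<le> Mv p \<and> (theta * Mv p < hq p a \<longrightarrow> a \<in> Sset p)"
  by (drule Qlist_disj, elim disjE; hypsubst; rule cls_2 cls_3 cls_5 cls_7 cls_11 cls_13 cls_17 cls_19 cls_23 cls_29 cls_31 cls_37 cls_41 cls_43 cls_47 cls_53 cls_59 cls_61 cls_67 cls_71 cls_73 cls_79 cls_83 cls_89 cls_97 cls_101 cls_103 cls_107 cls_109 cls_113 cls_127 cls_131 cls_137 cls_139 cls_149 cls_151 cls_157 cls_163 cls_167)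

lemma prodM: "theta * Ebound * (\<Prod>q\<in>set Qlist. Mv q) \<le> 88272/10000"
  by (simp add: prod.distinct_set_conv_list Qlist_def theta_def Ebound_def vals_2 vals_3 vals_5 vals_7 vals_11 vals_13 vals_17 vals_19 vals_23 vals_29 vals_31 vals_37 vals_41 vals_43 vals_47 vals_53 vals_59 vals_61 vals_67 vals_71 vals_73 vals_79 vals_83 vals_89 vals_97 vals_101 vals_103 vals_107 vals_109 vals_113 vals_127 vals_131 vals_137 vals_139 vals_149 vals_151 vals_157 vals_163 vals_167)

lemma hisum: "(\<Sum>q\<in>set Qlist. hi q) = 94958297/625000"
  by (simp add: sum.distinct_set_conv_list Qlist_def hi_def)

lemma expE: "exp (94958297/625000 / 757 :: real) \<le> Ebound"
proof -
  have "exp (94958297/625000 / 757 :: real) \<le> (\<Sum>m<8. (94958297/625000 / 757 :: real) ^ m / fact m) / (1 - (94958297/625000 / 757) ^ 8 / fact 8)"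
    by (rule exp_upper_taylor) (simp_all add: fact_numeral power_divide)
  also have "\<dots> \<le> Ebound"
    by (simp add: Ebound_def lessThan_nat_numeral fact_numeral power_divide)
  finally show ?thesis .
qed

definition Q0list :: "nat list" where "Q0list = [5, 11, 13, 19, 23, 29, 31, 37, 41, 43, 47, 53, 59, 61, 67, 71, 73, 79, 83, 89, 97, 101, 103, 107, 109, 113, 127, 131, 137, 139, 163, 167]"

definition Qvar :: "nat list" where "Qvar = [2, 3, 7, 17, 149, 151, 157]"

definition cfix :: "nat \<Rightarrow> nat" where
  "cfix p = (if p = 5 then 3 else if p = 11 then 2 else if p = 13 then 2 else if p = 163 then 0 else if p = 167 then 0 else 1)"

definition Kc :: nat where "Kc = (\<Prod>q\<in>set Q0list. q ^ cfix q)"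

lemma Kc_val: "Kc = 50143363831781658951464297542925120035132557962453148875"
  by (simp add: Kc_def prod.distinct_set_conv_list Q0list_def cfix_def)

lemma Fc_val: "(\<Prod>q\<in>set Q0list. fpp q (cfix q)) = 1526522940573799635473218528334284062720000/641588671628541469932857836956346815954821"
  by (simp add: prod.distinct_set_conv_list Q0list_def cfix_def fpp_0 fpp_1 fpp_Suc fpp_numeral power_divide)

lemma Qlist_split: "set Qlist = set Q0list \<union> set Qvar" "set Q0list \<inter> set Qvar = {}"
  by (auto simp: Qlist_def Q0list_def Qvar_def)

lemma Q0_cls: "q \<in> set Q0list \<Longrightarrow> Sset q = {cfix q}"
  unfolding Q0list_def by (simp; elim disjE; simp add: cfix_def vals_5 vals_11 vals_13 vals_19 vals_23 vals_29 vals_31 vals_37 vals_41 vals_43 vals_47 vals_53 vals_59 vals_61 vals_67 vals_71 vals_73 vals_79 vals_83 vals_89 vals_97 vals_101 vals_103 vals_107 vals_109 vals_113 vals_127 vals_131 vals_137 vals_139 vals_163 vals_167)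

lemma final_enum:
  fixes a2 a3 a7 a17 b1 b2 b3 :: nat
  shows "a2 \<in> {8,9,10} \<Longrightarrow> a3 \<in> {5,6} \<Longrightarrow> a7 \<in> {2,3} \<Longrightarrow> a17 \<in> {1,2} \<Longrightarrow> b1 \<in> {0,1} \<Longrightarrow> b2 \<in> {0,1} \<Longrightarrow> b3 \<in> {0,1}
    \<Longrightarrow> 15442140672 < (2 ^ a2 * 3 ^ a3 * 7 ^ a7 * 17 ^ a17 * 149 ^ b1 * 151 ^ b2 * 157 ^ b3::nat) \<Longrightarrow> (2 ^ a2 * 3 ^ a3 * 7 ^ a7 * 17 ^ a17 * 149 ^ b1 * 151 ^ b2 * 157 ^ b3::nat) * 3575 < 68653890885342
    \<Longrightarrow> 88272/10000 < 1526522940573799635473218528334284062720000/641588671628541469932857836956346815954821 * (fpp 2 a2 * fpp 3 a3 * fpp 7 a7 * fpp 17 a17 * fpp 149 b1 * fpp 151 b2 * fpp 157 b3)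
    \<Longrightarrow> (2 ^ a2 * 3 ^ a3 * 7 ^ a7 * 17 ^ a17 * 149 ^ b1 * 151 ^ b2 * 157 ^ b3::nat) = 15649417728"
  apply (simp only: insert_iff empty_iff simp_thms)
  apply (elim disjE)
  apply (simp_all add: fpp_0 fpp_1 fpp_Suc fpp_numeral power_divide)
  done

lemma SA425_val: "SA425 = Kc * 15442140672"
proof -
  have "{p::nat. prime p \<and> 17 \<le> p \<and> p \<le> 149} = set [17, 19, 23, 29, 31, 37, 41, 43, 47, 53, 59, 61, 67, 71, 73, 79, 83, 89, 97, 101, 103, 107, 109, 113, 127, 131, 137, 139, 149]"
    by (subst prime_filter) (simp_all add: Qlist_def)
  then show ?thesis by (simp add: SA425_def Kc_val)
qed

lemma J0_val: "J0 = Kc * 15649417728"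
proof -
  have "{p::nat. prime p \<and> 17 \<le> p \<and> p \<le> 139} = set [17, 19, 23, 29, 31, 37, 41, 43, 47, 53, 59, 61, 67, 71, 73, 79, 83, 89, 97, 101, 103, 107, 109, 113, 127, 131, 137, 139]"
    by (subst prime_filter) (simp_all add: Qlist_def)
  then show ?thesis by (simp add: J0_def Kc_val)
qed

lemma N39_prod: "N39 * 3575 = Kc * 68653890885342"
  by (simp add: N39_def first_primes_39 prod.distinct_set_conv_list Qlist_def Kc_val)

lemma lo_le_ln:
  assumes pp: "prime p" shows "lo p \<le> ln (real p)"
proof (cases "p \<in> set Qlist")
  case True then show ?thesis using lo_le_ln_small by blast
next
  case False
  then have p173: "173 \<le> p" using prime_small_iff pp by (meson not_less)
  have "lo p = 51532771/10000000" using not_in_Qlist_defaults(1)[OF False] .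
  also have "\<dots> \<le> ln (173::real)" using lnb_173 by simp
  also have "\<dots> \<le> ln (real p)" using p173 by simp
  finally show ?thesis .
qed

lemma w_ok:
  assumes pp: "prime p" shows "1 \<le> w p \<and> w p \<le> exp (lo p / 757)"
proof (cases "p \<in> set Qlist")
  case True then show ?thesis using w_ok_small by blast
next
  case False
  show ?thesis unfolding not_in_Qlist_defaults[OF False]
    by (rule w_quad) (simp_all add: power_divide)
qed

lemma hq_pos: "prime p \<Longrightarrow> 0 < hq p a"
  using w_ok[of p] fpp_pos[of p a] unfolding hq_def by (intro divide_pos_pos) auto

lemma hq_cls:
  assumes pp: "prime p" shows "hq p a \<le> Mv p \<and> (theta * Mv p < hq p a \<longrightarrow> a \<in> Sset p)"
proof (cases "p \<in> set Qlist")
  case True then show ?thesis using hq_cls_small by blast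
next
  case False
  then have p173: "173 \<le> p" using prime_small_iff pp by (meson not_less)
  note d = not_in_Qlist_defaults[OF False]
  show ?thesis
  proof (cases "a = 0")
    case True
    then show ?thesis by (simp add: d hq_def fpp_0)
  next
    case False
    have "hq p a \<le> (real p / (real p - 1)) / w p ^ 1"
      unfolding hq_def by (rule tail_bound) (use False p173 in \<open>simp_all add: d\<close>)
    also have "\<dots> \<le> (173 / 172) / w p"
    proof -
      have "real p / (real p - 1) \<le> 173 / 172" using p173 by (simp add: divide_simps)
      then have "(real p / (real p - 1)) / w p \<le> (173 / 172) / w p"
        by (rule divide_right_mono) (simp add: d)
      then show ?thesis by simp
    qed
    also have "\<dots> \<le> theta" by (simp add: d theta_def)
    finally have "hq p a \<le> theta" .
    moreover have "theta \<le> 1" by (simp add: theta_def)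
    ultimately show ?thesis by (simp add: d)
  qed
qed

lemma main_reduction:
  assumes n0: "0 < n" and nN: "n < N39" and fT: "88272/10000 < real (divisor_sigma n) / real n"
  shows "prime_factors n \<subseteq> set Qlist \<and> (\<forall>q\<in>set Qlist. multiplicity q n \<in> Sset q)"
proof -
  define P where "P = prime_factors n"
  define a where "a p = multiplicity p n" for p
  define R where "R = P \<union> set Qlist"
  have finR: "finite R" unfolding R_def P_def by simp
  have primeR: "prime p" if "p \<in> R" for p
    using that Qlist_primes unfolding R_def P_def by auto
  have PR: "P \<subseteq> R" unfolding R_def by auto
  have a0: "a p = 0" if "p \<in> R - P" for p
  proof -
    have "\<not> p dvd n" using that primeR[of p] n0 unfolding P_def by (auto simp: in_prime_factors_iff)
    then show ?thesis unfolding a_def by (rule not_dvd_imp_multiplicity_0)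
  qed
  have fN: "real (divisor_sigma n) / real n = (\<Prod>p\<in>R. fpp p (a p))"
  proof -
    have "real (divisor_sigma n) / real n = (\<Prod>p\<in>P. fpp p (a p))"
      using sigma_ratio_prod[OF n0] unfolding P_def a_def .
    also have "\<dots> = (\<Prod>p\<in>R. fpp p (a p))"
      by (rule prod.mono_neutral_left[OF finR PR]) (simp add: a0 fpp_0)
    finally show ?thesis .
  qed
  have lnn: "ln (real n) = (\<Sum>p\<in>R. real (a p) * ln (real p))"
  proof -
    have "real n = (\<Prod>p\<in>P. real p ^ a p)"
      using prime_factorization_nat[OF n0] unfolding P_def a_def
      by (metis (no_types, lifting) of_nat_power of_nat_prod prod.cong)
    then have "ln (real n) = (\<Sum>p\<in>P. ln (real p ^ a p))"
      using primeR PR prime_gt_0_nat by (simp add: ln_prod P_def subset_iff)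
    also have "\<dots> = (\<Sum>p\<in>P. real (a p) * ln (real p))"
      using primeR PR prime_gt_0_nat by (intro sum.cong) (auto simp: ln_realpow)
    also have "\<dots> = (\<Sum>p\<in>R. real (a p) * ln (real p))"
      by (rule sum.mono_neutral_left[OF finR PR]) (simp add: a0)
    finally show ?thesis .
  qed
  have N39Q: "N39 = (\<Prod>q\<in>set Qlist. q)" by (simp add: N39_def first_primes_39)
  have lnN: "ln (real N39) \<le> 94958297/625000"
  proof -
    have "ln (real N39) = (\<Sum>q\<in>set Qlist. ln (real q))"
      unfolding N39Q using Qlist_primes prime_gt_0_nat by (simp add: ln_prod)
    also have "\<dots> \<le> (\<Sum>q\<in>set Qlist. hi q)"
      by (rule sum_mono) (use lo_le_ln_small in blast)
    also have "\<dots> = 94958297/625000" by (rule hisum)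
    finally show ?thesis .
  qed
  have N0: "0 < N39" using nN by simp
  have lnlt: "ln (real n) \<le> ln (real N39)" using n0 nN by simp
  have wprod: "(\<Prod>p\<in>R. w p ^ a p) \<le> Ebound"
  proof -
    have "(\<Prod>p\<in>R. w p ^ a p) \<le> (\<Prod>p\<in>R. exp (lo p / 757) ^ a p)"
    proof (rule prod_mono)
      fix i assume "i \<in> R"
      then have wi: "1 \<le> w i" "w i \<le> exp (lo i / 757)" using w_ok primeR by auto
      then show "0 \<le> w i ^ a i \<and> w i ^ a i \<le> exp (lo i / 757) ^ a i"
        by (auto intro: power_mono)
    qed
    also have "\<dots> = exp (\<Sum>p\<in>R. real (a p) * (lo p / 757))"
      unfolding exp_sum[OF finR] by (rule prod.cong[OF refl]) (simp only: exp_of_nat_mult)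
    also have "\<dots> \<le> exp (\<Sum>p\<in>R. real (a p) * (ln (real p) / 757))"
      using lo_le_ln primeR by (auto intro!: sum_mono mult_left_mono divide_right_mono)
    also have "(\<Sum>p\<in>R. real (a p) * (ln (real p) / 757)) = ln (real n) / 757"
      unfolding lnn by (simp add: sum_divide_distrib)
    also have "exp (ln (real n) / 757) \<le> exp (94958297/625000 / 757)"
      using lnlt lnN by simp
    also have "\<dots> \<le> Ebound" by (rule expE)
    finally show ?thesis .
  qed
  have wpos: "(\<Prod>p\<in>R. w p ^ a p) > 0"
  proof (rule prod_pos)
    fix i assume "i \<in> R"
    then have "1 \<le> w i" using w_ok primeR by auto
    then show "0 < w i ^ a i" by simp
  qed
  have Epos: "Ebound > 0" by (simp add: Ebound_def)
  have fpos: "real (divisor_sigma n) / real n > 0" using fT by linarith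
  have hprod: "(\<Prod>p\<in>R. hq p (a p)) = (real (divisor_sigma n) / real n) / (\<Prod>p\<in>R. w p ^ a p)"
    unfolding fN hq_def by (rule prod_dividef)
  have hgt: "(\<Prod>p\<in>R. hq p (a p)) > (88272/10000) / Ebound"
  proof -
    have "(88272/10000) / Ebound < (real (divisor_sigma n) / real n) / Ebound"
      by (rule divide_strict_right_mono[OF fT Epos])
    also have "\<dots> \<le> (real (divisor_sigma n) / real n) / (\<Prod>p\<in>R. w p ^ a p)"
      using wprod wpos fpos by (intro divide_left_mono) auto
    finally show ?thesis unfolding hprod .
  qed
  have hall: "theta * Mv p < hq p (a p)" if pR: "p \<in> R" for p
  proof (rule ccontr)
    assume "\<not> theta * Mv p < hq p (a p)"
    then have p0: "hq p (a p) \<le> theta * Mv p" by simp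
    have Mnn: "0 \<le> Mv q" if "q \<in> R" for q
      using hq_cls[OF primeR[OF that], of "a q"] hq_pos[OF primeR[OF that], of "a q"] by linarith
    have "(\<Prod>q\<in>R. hq q (a q)) = hq p (a p) * (\<Prod>q\<in>R-{p}. hq q (a q))"
      by (rule prod.remove[OF finR pR])
    also have "\<dots> \<le> (theta * Mv p) * (\<Prod>q\<in>R-{p}. Mv q)"
    proof (rule mult_mono[OF p0])
      show "(\<Prod>q\<in>R-{p}. hq q (a q)) \<le> (\<Prod>q\<in>R-{p}. Mv q)"
        by (rule prod_mono) (use hq_cls hq_pos primeR in \<open>auto intro: less_imp_le\<close>)
      show "0 \<le> theta * Mv p" using Mnn[OF pR] by (simp add: theta_def)
      show "0 \<le> (\<Prod>q\<in>R-{p}. hq q (a q))"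
      proof (rule prod_nonneg)
        fix q assume "q \<in> R - {p}"
        then show "0 \<le> hq q (a q)" using hq_pos[OF primeR[of q], of "a q"] by simp
      qed
    qed
    also have "\<dots> = theta * (\<Prod>q\<in>R. Mv q)"
      using prod.remove[OF finR pR, of Mv] by simp
    also have "(\<Prod>q\<in>R. Mv q) = (\<Prod>q\<in>set Qlist. Mv q)"
      by (rule prod.mono_neutral_right[OF finR]) (auto simp: R_def not_in_Qlist_defaults)
    also have "theta * (\<Prod>q\<in>set Qlist. Mv q) \<le> (88272/10000) / Ebound"
      using prodM Epos by (simp add: le_divide_eq mult.commute mult.left_commute)
    finally show False using hgt by simp
  qed
  have aS: "a p \<in> Sset p" if "p \<in> R" for p
    using hq_cls[OF primeR[OF that], of "a p"] hall[OF that] by blast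
  have PQ: "P \<subseteq> set Qlist"
  proof
    fix p assume pP: "p \<in> P"
    show "p \<in> set Qlist"
    proof (rule ccontr)
      assume "p \<notin> set Qlist"
      then have "a p = 0" using aS[of p] pP PR not_in_Qlist_defaults(4) by auto
      moreover have "a p > 0" using pP unfolding P_def a_def by (auto simp: prime_factors_multiplicity)
      ultimately show False by simp
    qed
  qed
  show ?thesis using PQ aS unfolding P_def a_def R_def by auto
qed

lemma fN_Q:
  "real (divisor_sigma (\<Prod>q\<in>set Qlist. q ^ e q)) / real (\<Prod>q\<in>set Qlist. q ^ e q) = (\<Prod>q\<in>set Qlist. fpp q (e q))"
proof -
  have pr: "\<And>p. p \<in> set Qlist \<Longrightarrow> prime p" using Qlist_primes by blast
  have "divisor_sigma (\<Prod>q\<in>set Qlist. q ^ e q) = (\<Prod>q\<in>set Qlist. divisor_sigma (q ^ e q))"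
    by (rule divisor_sigma_prod) (use pr in auto)
  then have "real (divisor_sigma (\<Prod>q\<in>set Qlist. q ^ e q)) / real (\<Prod>q\<in>set Qlist. q ^ e q)
      = (\<Prod>q\<in>set Qlist. real (divisor_sigma (q ^ e q))) / (\<Prod>q\<in>set Qlist. real (q ^ e q))"
    by (simp only: of_nat_prod)
  also have "\<dots> = (\<Prod>q\<in>set Qlist. real (divisor_sigma (q ^ e q)) / real (q ^ e q))"
    by (rule prod_dividef[symmetric])
  also have "\<dots> = (\<Prod>q\<in>set Qlist. fpp q (e q))"
    by (rule prod.cong[OF refl], rule fpp_prime_power) (use pr in auto)
  finally show ?thesis .
qed

lemma split_Q: "(\<Prod>q\<in>set Qlist. g q) = (\<Prod>q\<in>set Q0list. g q) * (g 2 * g 3 * g 7 * g 17 * g 149 * g 151 * g 157)"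
proof -
  have "(\<Prod>q\<in>set Qlist. g q) = (\<Prod>q\<in>set Q0list. g q) * (\<Prod>q\<in>set Qvar. g q)"
    unfolding Qlist_split(1) by (rule prod.union_disjoint) (simp_all add: Qlist_split(2))
  also have "(\<Prod>q\<in>set Qvar. g q) = g 2 * g 3 * g 7 * g 17 * g 149 * g 151 * g 157"
    by (simp add: Qvar_def mult.assoc)
  finally show ?thesis .
qed

lemma Kc_pos: "Kc > 0" by (simp add: Kc_val)

lemma Q0_not_var: "q \<in> set Q0list \<Longrightarrow> q \<noteq> 2 \<and> q \<noteq> 3 \<and> q \<noteq> 7 \<and> q \<noteq> 17 \<and> q \<noteq> 149 \<and> q \<noteq> 151 \<and> q \<noteq> 157"
  using Qlist_split(2) by (auto simp: Qvar_def)

theorem proposition5p3: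
  fixes n :: nat
  shows "(SA425 < n \<and> n < N39 \<and> real (divisor_sigma n) / real n > 8.8272) \<longleftrightarrow> n = J0"
proof
  assume H: "SA425 < n \<and> n < N39 \<and> real (divisor_sigma n) / real n > 8.8272"
  then have n0: "0 < n" by auto
  have fT: "88272/10000 < real (divisor_sigma n) / real n" using H by simp
  define a where "a q = multiplicity q n" for q
  have red: "prime_factors n \<subseteq> set Qlist" "\<forall>q\<in>set Qlist. a q \<in> Sset q"
    using main_reduction[OF n0 _ fT] H unfolding a_def by auto
  have nQ: "n = (\<Prod>q\<in>set Qlist. q ^ a q)"
  proof -
    have "n = (\<Prod>p\<in>prime_factors n. p ^ a p)" using prime_factorization_nat[OF n0] unfolding a_def .
    also have "\<dots> = (\<Prod>q\<in>set Qlist. q ^ a q)"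
    proof (rule prod.mono_neutral_left[OF _ red(1)])
      show "finite (set Qlist)" by simp
      show "\<forall>i\<in>set Qlist - prime_factors n. i ^ a i = 1"
      proof
        fix i assume i: "i \<in> set Qlist - prime_factors n"
        then have "\<not> i dvd n" using Qlist_primes n0 by (auto simp: in_prime_factors_iff)
        then show "i ^ a i = 1" unfolding a_def by (simp add: not_dvd_imp_multiplicity_0)
      qed
    qed
    finally show ?thesis .
  qed
  have aQ0: "a q = cfix q" if "q \<in> set Q0list" for q
    using red(2) Q0_cls[OF that] that Qlist_split(1) by auto
  have K: "(\<Prod>q\<in>set Q0list. q ^ a q) = Kc"
    unfolding Kc_def by (rule prod.cong) (simp_all add: aQ0)
  have FcE: "(\<Prod>q\<in>set Q0list. fpp q (a q)) = (1526522940573799635473218528334284062720000/641588671628541469932857836956346815954821)"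
    using Fc_val by (metis (no_types, lifting) aQ0 prod.cong)
  define m where "m = (2::nat) ^ a 2 * 3 ^ a 3 * 7 ^ a 7 * 17 ^ a 17 * 149 ^ a 149 * 151 ^ a 151 * 157 ^ a 157"
  have nm: "n = Kc * m" unfolding m_def by (subst nQ, subst split_Q) (simp add: K)
  have fm: "real (divisor_sigma n) / real n = (1526522940573799635473218528334284062720000/641588671628541469932857836956346815954821) * (fpp 2 (a 2) * fpp 3 (a 3) * fpp 7 (a 7) * fpp 17 (a 17) * fpp 149 (a 149) * fpp 151 (a 151) * fpp 157 (a 157))"
    by (subst (1 2) nQ, subst fN_Q, subst split_Q) (simp add: FcE)
  have mem: "a 2 \<in> {8,9,10}" "a 3 \<in> {5,6}" "a 7 \<in> {2,3}" "a 17 \<in> {1,2}" "a 149 \<in> {0,1}" "a 151 \<in> {0,1}" "a 157 \<in> {0,1}"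
    using red(2) by (simp_all add: Qlist_def vals_2 vals_3 vals_7 vals_17 vals_149 vals_151 vals_157)
  have c1: "15442140672 < m"
  proof -
    have "Kc * 15442140672 < Kc * m" using H nm SA425_val by simp
    then show ?thesis using Kc_pos by simp
  qed
  have c2: "m * 3575 < 68653890885342"
  proof -
    have "Kc * (m * 3575) < Kc * 68653890885342" using H nm N39_prod by (metis mult.assoc mult.commute mult_less_mono1 zero_less_numeral)
    then show ?thesis using Kc_pos by simp
  qed
  have "m = 15649417728"
    using final_enum[OF mem c1[unfolded m_def] c2[unfolded m_def]] fT fm unfolding m_def by simp
  then show "n = J0" using nm J0_val by simp
next
  assume nJ: "n = J0"
  define e where "e q = (if q = 2 then 9 else if q = 3 then 5 else if q = 7 then 2 else if q = 17 then 1 else if q = 149 then 0 else if q = 151 then 1 else if q = 157 then 0 else cfix q)" for q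
  have eQ0: "e q = cfix q" if "q \<in> set Q0list" for q using Q0_not_var[OF that] unfolding e_def by simp
  have K: "(\<Prod>q\<in>set Q0list. q ^ e q) = Kc"
    unfolding Kc_def by (rule prod.cong) (simp_all add: eQ0)
  have FcE: "(\<Prod>q\<in>set Q0list. fpp q (e q)) = (1526522940573799635473218528334284062720000/641588671628541469932857836956346815954821)"
    using Fc_val by (metis (no_types, lifting) eQ0 prod.cong)
  have JQ: "J0 = (\<Prod>q\<in>set Qlist. q ^ e q)"
    by (subst split_Q, unfold K) (simp add: e_def J0_val)
  have "real (divisor_sigma J0) / real J0 = (1526522940573799635473218528334284062720000/641588671628541469932857836956346815954821) * (fpp 2 9 * fpp 3 5 * fpp 7 2 * fpp 17 1 * fpp 149 0 * fpp 151 1 * fpp 157 0)"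
    by (subst (1 2) JQ, subst fN_Q, subst split_Q, unfold FcE) (simp add: e_def)
  also have "\<dots> > 8.8272" by (simp add: fpp_0 fpp_1 fpp_Suc fpp_numeral power_divide)
  finally have f: "real (divisor_sigma J0) / real J0 > 8.8272" .
  have "SA425 < J0" using SA425_val J0_val Kc_pos by simp
  moreover have "J0 < N39"
  proof -
    have "J0 * 3575 < N39 * 3575" using J0_val N39_prod Kc_pos by simp
    then show ?thesis by simp
  qed
  ultimately show "SA425 < n \<and> n < N39 \<and> real (divisor_sigma n) / real n > 8.8272" using f nJ by simp
qed

end
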